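(* Let $n\geq 1$ and let $k_1,\ldots,k_n\geq 1$ be integers, not all equal to $1$; put $k=k_1+\cdots+k_n$. Then, as polynomials in $t$, \[\sum_{l=1}^n\sum_{j=1}^{k_l-1}\zeta^t(k_l+1-j,k_{l+1},\ldots,k_n,k_1,\ldots,k_{l-1},j) =(1-t)\sum_{l=1}^n\zeta^t(k_l+1,k_{l+1},\ldots,k_n,k_1,\ldots,k_{l-1})+t^n k\,\zeta(k+1).\]
   Context: For integers $k_1\geq 2$, $k_2,\ldots,k_m\geq 1$, the multiple zeta value is $\zeta(k_1,\ldots,k_m)=\sum_{m_1>\cdots>m_m>0}m_1^{-k_1}\cdots m_m^{-k_m}$. For such an index, let $\mathbf{p}$ run over all indices of the form $(k_1\square k_2\square\cdots\square k_m)$ where each $\square$ is filled by a comma or a plus sign (plus meaning adjacent entries are added), and let $\sigma(\mathbf{p})$ be the number of plus signs. Define $\zeta^t(k_1,\ldots,k_m)=\sum_{\mathbf{p}}t^{\sigma(\mathbf{p})}\zeta(\mathbf{p})\in\mathbb{R}[t]$ for an indeterminate $t$. *)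

theory Defs
  imports "HOL-Analysis.Analysis" "HOL-Computational_Algebra.Polynomial"
begin

definition mzv :: "nat list \<Rightarrow> real" where
  "mzv ks = infsum (\<lambda>ms. \<Prod>i<length ks. 1 / real (ms ! i) ^ (ks ! i))
     {ms. length ms = length ks \<and> sorted_wrt (>) ms \<and> (\<forall>m\<in>set ms. 0 < m)}"

text \<open>All indices obtained by filling each gap with a comma or a plus sign,
  paired with the number of plus signs.\<close>
fun combos :: "nat list \<Rightarrow> (nat list \<times> nat) list" where
  "combos [] = [([], 0)]"
| "combos [k] = [([k], 0)]"
| "combos (k # k' # ks) =
     concat (map (\<lambda>(p, s). [(k # p, s), ((k + hd p) # tl p, Suc s)]) (combos (k' # ks)))"

definition zeta_t :: "nat list \<Rightarrow> real poly" where
  "zeta_t ks = (\<Sum>(p, s) \<leftarrow> combos ks. monom (mzv p) s)"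

end

theory Submission
  imports Defs
begin


fun K :: "real \<Rightarrow> nat list \<Rightarrow> nat \<Rightarrow> nat \<Rightarrow> real" where
  "K t [] x y = 0"
| "K t [a] x y = (if x = y then 1 / real x ^ a else 0)"
| "K t (a # b # cs) x y = 1 / real x ^ a * (\<Sum>z=1..x. (if z = x then t else 1) * K t (b # cs) z y)"

lemma K_Cons: "cs \<noteq> [] \<Longrightarrow> K t (a # cs) x y = 1 / real x ^ a * (\<Sum>z=1..x. (if z = x then t else 1) * K t cs z y)"
  by (cases cs) auto

lemma K_zero: "x < y \<Longrightarrow> K t c x y = 0"
  by (induction t c x y rule: K.induct) auto

lemma K_nonneg: "0 \<le> t \<Longrightarrow> 0 \<le> K t c x y"
  by (induction t c x y rule: K.induct) (auto intro!: sum_nonneg mult_nonneg_nonneg divide_nonneg_nonneg)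

lemma K_top: "cs \<noteq> [] \<Longrightarrow> K t (a # cs) x y = 1 / real x ^ a * K t (0 # cs) x y"
  by (simp add: K_Cons)

lemma K_bot: "K t (cs @ [b]) x y = 1 / real y ^ b * K t (cs @ [0]) x y"
proof (induction cs arbitrary: x)
  case Nil
  then show ?case by simp
next
  case (Cons a cs)
  have "K t ((a # cs) @ [b]) x y = 1 / real x ^ a * (\<Sum>z=1..x. (if z = x then t else 1) * K t (cs @ [b]) z y)"
    by (simp add: K_Cons)
  also have "\<dots> = 1 / real y ^ b * (1 / real x ^ a * (\<Sum>z=1..x. (if z = x then t else 1) * K t (cs @ [0]) z y))"
    by (simp add: Cons sum_distrib_left algebra_simps)
  also have "\<dots> = 1 / real y ^ b * K t ((a # cs) @ [0]) x y"
    by (simp add: K_Cons)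
  finally show ?case .
qed

lemma sum_single_nz:
  assumes "finite A" "a \<in> A" "\<And>z. z \<in> A \<Longrightarrow> z \<noteq> a \<Longrightarrow> f z = 0"
  shows "sum f A = f a"
proof -
  have "sum f A = f a + sum f (A - {a})" using assms by (simp add: sum.remove)
  also have "sum f (A - {a}) = 0" using assms by (intro sum.neutral) auto
  finally show ?thesis by simp
qed

lemma K_diag: "c \<noteq> [] \<Longrightarrow> 1 \<le> x \<Longrightarrow> K t c x x = t ^ (length c - 1) / real x ^ sum_list c"
proof (induction c)
  case Nil
  then show ?case by simp
next
  case (Cons a cs)
  show ?case
  proof (cases "cs = []")
    case True
    then show ?thesis by simp
  next
    case False
    have "K t (a # cs) x x = 1 / real x ^ a * (\<Sum>z=1..x. (if z = x then t else 1) * K t cs z x)"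
      using False by (simp add: K_Cons)
    also have "(\<Sum>z=1..x. (if z = x then t else 1) * K t cs z x) = t * K t cs x x"
      using Cons.prems by (subst sum_single_nz[where a=x]) (auto simp: K_zero)
    also have "K t cs x x = t ^ (length cs - 1) / real x ^ sum_list cs"
      using Cons False by simp
    finally show ?thesis using False Cons.prems
      by (cases cs) (simp_all add: power_add field_simps)
  qed
qed

lemma K_botexp:
  assumes "cs \<noteq> []" "1 \<le> y"
  shows "K t (cs @ [b]) x y = 1 / real y ^ b * (\<Sum>z=y..x. (if z = y then t else 1) * K t cs x z)"
  using assms(1)
proof (induction cs arbitrary: x)
  case Nil
  then show ?case by simp
next
  case (Cons a cs)
  show ?case
  proof (cases "cs = []")
    case True
    have "K t ((a # cs) @ [b]) x y = 1 / real x ^ a * (\<Sum>z=1..x. (if z = x then t else 1) * K t [b] z y)"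
      using True by simp
    also have "(\<Sum>z=1..x. (if z = x then t else 1) * K t [b] z y) = (\<Sum>z=1..x. (if z = y then (if z = x then t else 1) * (1 / real z ^ b) else 0))"
      by (intro sum.cong) auto
    finally have "K t ((a # cs) @ [b]) x y = 1 / real x ^ a * (\<Sum>z=1..x. (if z = y then (if z = x then t else 1) * (1 / real z ^ b) else 0))" .
    also have "\<dots> = (if y \<le> x then 1 / real x ^ a * ((if y = x then t else 1) * (1 / real y ^ b)) else 0)"
      using assms(2) by (simp add: sum.delta)
    also have "\<dots> = 1 / real y ^ b * (\<Sum>z=y..x. (if x = z then (if z = y then t else 1) * (1 / real x ^ a) else 0))"
      by (simp add: sum.delta sum.delta')
    also have "\<dots> = 1 / real y ^ b * (\<Sum>z=y..x. (if z = y then t else 1) * K t (a # cs) x z)"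
      using True by (intro arg_cong2[where f="(*)"] refl sum.cong) auto
    finally show ?thesis .
  next
    case False
    have "K t ((a # cs) @ [b]) x y = 1 / real x ^ a * (\<Sum>z'=1..x. (if z' = x then t else 1) * K t (cs @ [b]) z' y)"
      by (simp add: K_Cons)
    also have "\<dots> = 1 / real x ^ a * (\<Sum>z'=1..x. (if z' = x then t else 1) * (1 / real y ^ b *
                   (\<Sum>z=y..x. (if z = y then t else 1) * K t cs z' z)))"
    proof (rule arg_cong2[where f="(*)"], rule refl, rule sum.cong[OF refl])
      fix z' assume z': "z' \<in> {1..x}"
      have "(\<Sum>z=y..z'. (if z = y then t else 1) * K t cs z' z) = (\<Sum>z=y..x. (if z = y then t else 1) * K t cs z' z)"
        using z' by (intro sum.mono_neutral_left) (auto simp: K_zero)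
      then show "(if z' = x then t else 1) * K t (cs @ [b]) z' y = (if z' = x then t else 1) * (1 / real y ^ b *
                   (\<Sum>z=y..x. (if z = y then t else 1) * K t cs z' z))"
        using Cons.IH[OF False] by simp
    qed
    also have "\<dots> = 1 / real y ^ b * (\<Sum>z=y..x. (if z = y then t else 1) * (1 / real x ^ a * (\<Sum>z'=1..x. (if z' = x then t else 1) * K t cs z' z)))"
      by (simp add: sum_distrib_left sum_distrib_right algebra_simps) (subst sum.swap, simp add: mult_ac)
    also have "\<dots> = 1 / real y ^ b * (\<Sum>z=y..x. (if z = y then t else 1) * K t (a # cs) x z)"
      using False by (simp add: K_Cons)
    finally show ?thesis .
  qed
qed

definition G :: "real \<Rightarrow> nat list \<Rightarrow> nat \<Rightarrow> real" where
  "G t c x = (\<Sum>y=1..x. K t c x y)"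

lemma G_nonneg: "0 \<le> t \<Longrightarrow> 0 \<le> G t c x"
  unfolding G_def by (auto intro!: sum_nonneg K_nonneg)

lemma G_single: "1 \<le> x \<Longrightarrow> G t [a] x = 1 / real x ^ a"
  unfolding G_def by (subst sum_single_nz[where a=x]) auto

lemma G_Cons:
  assumes "cs \<noteq> []"
  shows "G t (a # cs) x = 1 / real x ^ a * (\<Sum>z=1..x. (if z = x then t else 1) * G t cs z)"
proof -
  have "G t (a # cs) x = 1 / real x ^ a * (\<Sum>z=1..x. (if z = x then t else 1) * (\<Sum>y=1..x. K t cs z y))"
    unfolding G_def using assms
    by (simp add: K_Cons sum_distrib_left sum_distrib_right algebra_simps) (rule sum.swap)
  also have "\<dots> = 1 / real x ^ a * (\<Sum>z=1..x. (if z = x then t else 1) * G t cs z)"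
    unfolding G_def
  proof (rule arg_cong2[where f="(*)"], rule refl, rule sum.cong[OF refl])
    fix z assume "z \<in> {1..x}"
    then show "(if z = x then t else 1) * (\<Sum>y=1..x. K t cs z y) = (if z = x then t else 1) * (\<Sum>y=1..z. K t cs z y)"
      using \<open>z \<in> {1..x}\<close> by (auto simp: K_zero intro!: sum.mono_neutral_right)
  qed
  finally show ?thesis .
qed

lemma K_bump: "cs \<noteq> [] \<Longrightarrow> K t ((a + b) # cs) x y = 1 / real x ^ a * K t (b # cs) x y"
  by (simp add: K_Cons power_add)

lemma K_bump1: "K t ((a + b) # cs) x y = 1 / real x ^ a * K t (b # cs) x y"
  by (cases cs) (auto simp: K_Cons power_add)

lemma G_bump: "G t ((a + b) # cs) x = 1 / real x ^ a * G t (b # cs) x"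
  unfolding G_def by (simp add: K_bump1 sum_distrib_left)


lemma sum_list_swap_sum:
  "(\<Sum>z\<in>Z. sum_list (map (f z) L)) = sum_list (map (\<lambda>q. \<Sum>z\<in>Z. f z q) L)"
  by (induction L) (auto simp: sum.distrib)

lemma sum_list_aux:
  "c * (\<Sum>z\<in>Z. w z * sum_list (map (\<lambda>(p, s). (t::real) ^ s * g p z) L)) =
   sum_list (map (\<lambda>(p, s). t ^ s * (c * (\<Sum>z\<in>Z. w z * g p z))) L)"
  by (induction L) (auto simp: sum.distrib algebra_simps sum_distrib_left)

lemma concat_sum:
  "sum_list (map (\<lambda>(p, s). F p s) (concat (map (\<lambda>(p, s). [(k # p, s), ((k + hd p) # tl p, Suc s)]) L))) =
   sum_list (map (\<lambda>(p, s). F (k # p) s + F ((k + hd p) # tl p) (Suc s)) L)"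
  by (induction L) auto

lemma combos_props:
  "c \<noteq> [] \<Longrightarrow> q \<in> set (combos c) \<Longrightarrow>
    fst q \<noteq> [] \<and> hd c \<le> hd (fst q) \<and> ((\<forall>x\<in>set c. 1 \<le> x) \<longrightarrow> (\<forall>x\<in>set (fst q). 1 \<le> x))"
proof (induction c arbitrary: q rule: combos.induct)
  case 1
  then show ?case by simp
next
  case (2 k)
  then show ?case by simp
next
  case (3 k k' ks)
  have "q \<in> (\<Union>r\<in>set (combos (k' # ks)). set ((\<lambda>(p, s). [(k # p, s), ((k + hd p) # tl p, Suc s)]) r))"
    using "3.prems"(2) by (simp only: combos.simps set_concat set_map image_image)
  then obtain r where r: "r \<in> set (combos (k' # ks))" and qr: "q \<in> set ((\<lambda>(p, s). [(k # p, s), ((k + hd p) # tl p, Suc s)]) r)"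
    by blast
  obtain p s where rps: "r = (p, s)" by (cases r)
  have ps: "(p, s) \<in> set (combos (k' # ks))" using r rps by simp
  have q: "q = (k # p, s) \<or> q = ((k + hd p) # tl p, Suc s)" using qr rps by simp
  have IH1: "p \<noteq> []" and IH2: "k' \<le> hd p" and IH3: "(\<forall>x\<in>set (k' # ks). 1 \<le> x) \<longrightarrow> (\<forall>x\<in>set p. 1 \<le> x)"
    using "3.IH"[OF _ ps] unfolding fst_conv list.sel(1) by blast+
  have tlp: "set (tl p) \<subseteq> set p" using IH1 by (cases p) auto
  have g1: "fst q \<noteq> []" using q by auto
  have g2: "hd (k # k' # ks) \<le> hd (fst q)" using q by auto
  have g3: "(\<forall>x\<in>set (k # k' # ks). 1 \<le> x) \<longrightarrow> (\<forall>x\<in>set (fst q). 1 \<le> x)"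
  proof
    assume "\<forall>x\<in>set (k # k' # ks). 1 \<le> x"
    then have a: "1 \<le> k" and b: "\<forall>x\<in>set (k' # ks). 1 \<le> x" by auto
    from IH3 b have c: "\<forall>x\<in>set p. 1 \<le> x" by (rule mp)
    show "\<forall>x\<in>set (fst q). 1 \<le> x"
    proof
      fix x assume x: "x \<in> set (fst q)"
      from q show "1 \<le> x"
      proof
        assume "q = (k # p, s)"
        then show ?thesis using x a c by auto
      next
        assume "q = ((k + hd p) # tl p, Suc s)"
        then have "x = k + hd p \<or> x \<in> set (tl p)" using x by auto
        then show ?thesis using a c tlp by auto
      qed
    qed
  qed
  show ?case using g1 g2 g3 by blast
qed

lemma G_single_t: "G t [a] x = G 0 [a] x"
  unfolding G_def by simp

lemma G_combos:
  assumes "c \<noteq> []" "1 \<le> x"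
  shows "G t c x = sum_list (map (\<lambda>(p, s). t ^ s * G 0 p x) (combos c))"
  using assms
proof (induction c arbitrary: x rule: combos.induct)
  case 1
  then show ?case by simp
next
  case (2 k)
  then show ?case using G_single[of x t k] G_single[of x 0 k] by simp
next
  case (3 k k' ks)
  let ?L = "combos (k' # ks)"
  have "G t (k # k' # ks) x = 1 / real x ^ k * (\<Sum>z=1..x. (if z = x then t else 1) * G t (k' # ks) z)"
    by (simp add: G_Cons)
  also have "\<dots> = 1 / real x ^ k * (\<Sum>z=1..x. (if z = x then t else 1) *
       sum_list (map (\<lambda>(p, s). t ^ s * G 0 p z) ?L))"
    using "3.IH" by (intro arg_cong2[where f="(*)"] refl sum.cong) auto
  also have "\<dots> = sum_list (map (\<lambda>(p, s). t ^ s * (1 / real x ^ k * (\<Sum>z=1..x. (if z = x then t else 1) * G 0 p z))) ?L)"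
    by (rule sum_list_aux)
  also have "\<dots> = sum_list (map (\<lambda>(p, s). t ^ s * G 0 (k # p) x + t ^ Suc s * G 0 ((k + hd p) # tl p) x) ?L)"
  proof (intro arg_cong[where f=sum_list] map_cong refl)
    fix q assume q: "q \<in> set ?L"
    obtain p s where qps: "q = (p, s)" by force
    have pne: "p \<noteq> []" using combos_props[of "k' # ks" q] q qps by simp
    have split: "(\<Sum>z=1..x. (if z = x then t else 1) * G 0 p z) = t * G 0 p x + (\<Sum>z=1..x. (if z = x then 0 else 1) * G 0 p z)"
    proof -
      have "(\<Sum>z=1..x. (if z = x then t else 1) * G 0 p z) = (\<Sum>z=1..x. (if z = x then t * G 0 p z else 0) + (if z = x then 0 else 1) * G 0 p z)"
        by (intro sum.cong) auto
      also have "\<dots> = t * G 0 p x + (\<Sum>z=1..x. (if z = x then 0 else 1) * G 0 p z)"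
        using "3.prems"(2) by (simp add: sum.distrib sum.delta')
      finally show ?thesis .
    qed
    have e1: "G 0 (k # p) x = 1 / real x ^ k * (\<Sum>z=1..x. (if z = x then 0 else 1) * G 0 p z)"
      using pne by (simp add: G_Cons)
    have e2: "G 0 ((k + hd p) # tl p) x = 1 / real x ^ k * G 0 p x"
      using G_bump[of 0 k "hd p" "tl p" x] pne by simp
    show "(case q of (p, s) \<Rightarrow> t ^ s * (1 / real x ^ k * (\<Sum>z = 1..x. (if z = x then t else 1) * G 0 p z))) =
          (case q of (p, s) \<Rightarrow> t ^ s * G 0 (k # p) x + t ^ Suc s * G 0 ((k + hd p) # tl p) x)"
      unfolding qps using split e1 e2 by (simp add: algebra_simps add_divide_distrib)
  qed
  also have "\<dots> = sum_list (map (\<lambda>(p, s). t ^ s * G 0 p x) (combos (k # k' # ks)))"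
    using concat_sum[where F="\<lambda>p s. t ^ s * G 0 p x" and k=k and L="?L"] by simp
  finally show ?case .
qed


section \<open>Harmonic bounds\<close>

lemma harm_le_ln1: "1 \<le> n \<Longrightarrow> harm n \<le> ln (real n) + (1::real)"
  using euler_mascheroni_sequence_decreasing[of 1 n] by (simp add: harm_def)

lemma harm_ge1: "1 \<le> n \<Longrightarrow> (1::real) \<le> harm n"
  using harm_mono[of 1 n] by (simp add: harm_def)

lemma harm_pow_le:
  assumes n: "1 \<le> n"
  shows "harm n ^ m \<le> (3 + 2 * real m) ^ m * real n powr (1/2)"
proof -
  define a :: real where "a = 1 / (2 * (real m + 1))"
  have a: "0 < a" unfolding a_def by simp
  have npos: "0 < real n" using n by simp
  have pa1: "1 \<le> real n powr a" using n a by (intro ge_one_powr_ge_zero) auto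
  have "a * ln (real n) = ln (real n powr a)" by (simp add: ln_powr)
  also have "\<dots> \<le> real n powr a - 1" using npos by (intro ln_le_minus_one) simp
  finally have "a * ln (real n) \<le> real n powr a - 1" .
  then have lnle: "ln (real n) \<le> (real n powr a) / a" using a by (simp add: field_simps)
  have "harm n \<le> 1 + real n powr a / a" using harm_le_ln1[OF n] lnle by simp
  also have "\<dots> \<le> (1 + 1 / a) * real n powr a" using pa1 a by (simp add: field_simps)
  also have "1 + 1 / a = 3 + 2 * real m" unfolding a_def by (simp add: field_simps)
  finally have h: "harm n \<le> (3 + 2 * real m) * real n powr a" .
  have "harm n ^ m \<le> ((3 + 2 * real m) * real n powr a) ^ m"
    using h harm_nonneg by (intro power_mono) auto
  also have "\<dots> = (3 + 2 * real m) ^ m * real n powr (real m * a)"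
    using npos by (simp add: power_mult_distrib powr_power)
  also have "real n powr (real m * a) \<le> real n powr (1/2)"
    using n unfolding a_def by (intro powr_mono) (auto simp: field_simps)
  then have "(3 + 2 * real m) ^ m * real n powr (real m * a) \<le> (3 + 2 * real m) ^ m * real n powr (1/2)"
    by (intro mult_left_mono) auto
  finally show ?thesis .
qed

lemma summable_harm_pow:
  "summable (\<lambda>i. harm (Suc i) ^ m / real (Suc i) ^ 2 :: real)"
proof (rule summable_comparison_test')
  show "summable (\<lambda>i. (3 + 2 * real m) ^ m * real (Suc i) powr (- 3/2))"
  proof (intro summable_mult)
    have "summable (\<lambda>n. real n powr (-3/2))" by (simp add: summable_real_powr_iff)
    then show "summable (\<lambda>i. real (Suc i) powr (- 3/2))"
      using summable_Suc_iff[of "\<lambda>n. real n powr (-3/2)"] by simp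
  qed
next
  fix i :: nat
  have pos: "0 < real (Suc i)" by simp
  have "norm (harm (Suc i) ^ m / real (Suc i) ^ 2) = harm (Suc i) ^ m / real (Suc i) ^ 2"
  proof -
    have hn: "0 \<le> (harm (Suc i) :: real) ^ m" by (simp add: harm_nonneg)
    then show ?thesis by simp
  qed
  also have "\<dots> \<le> (3 + 2 * real m) ^ m * real (Suc i) powr (1/2) / real (Suc i) ^ 2"
    by (intro divide_right_mono harm_pow_le) auto
  also have "(3 + 2 * real m) ^ m * real (Suc i) powr (1/2) / real (Suc i) ^ 2 =
             (3 + 2 * real m) ^ m * real (Suc i) powr (- 3/2)"
  proof -
    have "real (Suc i) powr (-3/2) * real (Suc i) powr (real 2) = real (Suc i) powr (-3/2 + real 2)"
      by (rule powr_add[symmetric])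
    also have "-3/2 + real 2 = 1/2" by simp
    also have "real (Suc i) powr (real 2) = real (Suc i) ^ 2" using pos by (rule powr_realpow)
    finally have e: "real (Suc i) powr (1/2) = real (Suc i) powr (-3/2) * real (Suc i) ^ 2" by simp
    show ?thesis unfolding e using pos by simp
  qed
  finally show "norm (harm (Suc i) ^ m / real (Suc i) ^ 2) \<le> (3 + 2 * real m) ^ m * real (Suc i) powr (- 3/2)" .
qed

section \<open>Bound on G\<close>

lemma G_le:
  assumes "c \<noteq> []" "0 \<le> t" "t \<le> 1" "\<forall>y\<in>set (tl c). 1 \<le> y" "1 \<le> x"
  shows "G t c x \<le> harm x ^ (length c - 1) / real x ^ hd c"
  using assms(1,4,5)
proof (induction c arbitrary: x)
  case Nil
  then show ?case by simp
next
  case (Cons a cs)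
  show ?case
  proof (cases "cs = []")
    case True
    then show ?thesis using Cons.prems G_single[of x t a] by simp
  next
    case False
    have ind: "\<forall>y\<in>set (tl cs). 1 \<le> y" using Cons.prems False by (cases cs) auto
    have hd1: "1 \<le> hd cs" using Cons.prems False by (cases cs) auto
    have Gc: "G t (a # cs) x = 1 / real x ^ a * (\<Sum>z=1..x. (if z = x then t else 1) * G t cs z)"
      using False by (simp add: G_Cons)
    have "(\<Sum>z=1..x. (if z = x then t else 1) * G t cs z) \<le> (\<Sum>z=1..x. harm x ^ (length cs - 1) * (1 / real z))"
    proof (intro sum_mono)
      fix z assume z: "z \<in> {1..x}"
      have "(if z = x then t else 1) * G t cs z \<le> 1 * G t cs z"
        using assms(2,3) G_nonneg[OF assms(2)] by (intro mult_right_mono) auto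
      also have "\<dots> \<le> harm z ^ (length cs - 1) / real z ^ hd cs"
        using Cons.IH[OF False ind] z by simp
      also have "\<dots> \<le> harm x ^ (length cs - 1) / real z ^ hd cs"
        using z by (intro divide_right_mono power_mono harm_mono harm_nonneg) auto
      also have "\<dots> \<le> harm x ^ (length cs - 1) / real z"
      proof (intro divide_left_mono)
        have "real z ^ 1 \<le> real z ^ hd cs" using z hd1 by (intro power_increasing) auto
        then show "real z \<le> real z ^ hd cs" by simp
      qed (use z in \<open>auto intro!: zero_le_power harm_nonneg\<close>)
      finally show "(if z = x then t else 1) * G t cs z \<le> harm x ^ (length cs - 1) * (1 / real z)"
        by simp
    qed
    also have "(\<Sum>z=1..x. harm x ^ (length cs - 1) * (1 / real z)) = harm x ^ (length cs - 1) * harm x"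
      by (simp add: harm_def sum_distrib_left divide_inverse)
    finally have "(\<Sum>z=1..x. (if z = x then t else 1) * G t cs z) \<le> harm x ^ (length cs - 1) * harm x" .
    then have "G t (a # cs) x \<le> 1 / real x ^ a * (harm x ^ (length cs - 1) * harm x)"
      unfolding Gc by (intro mult_left_mono) auto
    also have "\<dots> = harm x ^ (length (a # cs) - 1) / real x ^ hd (a # cs)"
      using False by (cases cs) auto
    finally show ?thesis .
  qed
qed

section \<open>Sums over positive integers in ennreal\<close>

definition SSum :: "(nat \<Rightarrow> real) \<Rightarrow> ennreal" where
  "SSum f = (\<Sum>i. ennreal (f (Suc i)))"

lemma SSum_cong: "(\<And>x. 1 \<le> x \<Longrightarrow> f x = g x) \<Longrightarrow> SSum f = SSum g"
  unfolding SSum_def by simp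

lemma SSum_add:
  assumes "\<And>x. 1 \<le> x \<Longrightarrow> 0 \<le> f x" "\<And>x. 1 \<le> x \<Longrightarrow> 0 \<le> g x"
  shows "SSum (\<lambda>x. f x + g x) = SSum f + SSum g"
  unfolding SSum_def using assms
  by (subst suminf_add[OF summableI summableI]) (simp add: ennreal_plus)

lemma SSum_cmult:
  assumes "0 \<le> c" "\<And>x. 1 \<le> x \<Longrightarrow> 0 \<le> f x"
  shows "SSum (\<lambda>x. c * f x) = ennreal c * SSum f"
  unfolding SSum_def using assms
  by (simp add: ennreal_mult)

lemma SSum_mono:
  assumes "\<And>x. 1 \<le> x \<Longrightarrow> f x \<le> g x"
  shows "SSum f \<le> SSum g"
  unfolding SSum_def using assms
  by (intro suminf_le summableI ennreal_leI) auto

lemma SSum_summable: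
  assumes "\<And>x. 1 \<le> x \<Longrightarrow> 0 \<le> f x" "summable (\<lambda>i. f (Suc i))"
  shows "SSum f = ennreal (\<Sum>i. f (Suc i))"
  unfolding SSum_def using assms by (intro suminf_ennreal2) auto

lemma SSum_fin:
  assumes "\<And>x. 1 \<le> x \<Longrightarrow> 0 \<le> g x" "\<And>x. 1 \<le> x \<Longrightarrow> f x \<le> g x" "summable (\<lambda>i. g (Suc i))"
  shows "SSum f < top"
proof -
  have "SSum f \<le> SSum g" by (rule SSum_mono) (use assms in auto)
  also have "\<dots> = ennreal (\<Sum>i. g (Suc i))" using assms by (intro SSum_summable)
  finally show ?thesis using order.strict_trans1 by fastforce
qed

lemma SSum_sum:
  assumes "finite A" "\<And>j x. j \<in> A \<Longrightarrow> 1 \<le> x \<Longrightarrow> 0 \<le> f j x"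
  shows "SSum (\<lambda>x. \<Sum>j\<in>A. f j x) = (\<Sum>j\<in>A. SSum (f j))"
  using assms
proof (induction A rule: finite_induct)
  case empty
  then show ?case by (simp add: SSum_def)
next
  case (insert a A)
  have "SSum (\<lambda>x. \<Sum>j\<in>insert a A. f j x) = SSum (\<lambda>x. f a x + (\<Sum>j\<in>A. f j x))"
    using insert by simp
  also have "\<dots> = SSum (f a) + SSum (\<lambda>x. \<Sum>j\<in>A. f j x)"
    using insert.prems by (intro SSum_add) (auto intro!: sum_nonneg)
  finally show ?case using insert by simp
qed

lemma FIN:
  assumes "p \<noteq> []" "2 \<le> hd p" "\<forall>y\<in>set p. 1 \<le> y" "0 \<le> t" "t \<le> 1"
  shows "SSum (G t p) < top"
proof (rule SSum_fin)
  show "summable (\<lambda>i. harm (Suc i) ^ (length p - 1) / real (Suc i) ^ 2)"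
    by (rule summable_harm_pow)
next
  fix x :: nat assume x: "1 \<le> x"
  show "0 \<le> harm x ^ (length p - 1) / real x ^ 2" by (intro divide_nonneg_nonneg zero_le_power harm_nonneg) auto
  have tl: "\<forall>y\<in>set (tl p). 1 \<le> y" using assms(1,3) by (cases p) auto
  have "G t p x \<le> harm x ^ (length p - 1) / real x ^ hd p"
    using G_le[OF assms(1,4,5) tl x] .
  also have "\<dots> \<le> harm x ^ (length p - 1) / real x ^ 2"
    using x assms(2) by (intro divide_left_mono power_increasing) (auto intro!: zero_le_power harm_nonneg)
  finally show "G t p x \<le> harm x ^ (length p - 1) / real x ^ 2" .
qed

section \<open>Swapping sums\<close>

lemma ennreal_suminf_swap: "(\<Sum>i. \<Sum>j. f i j :: ennreal) = (\<Sum>j. \<Sum>i. f i j)"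
proof -
  have "(\<Sum>i. \<Sum>j. f i j) = (\<integral>\<^sup>+i. (\<integral>\<^sup>+j. f i j \<partial>count_space UNIV) \<partial>count_space UNIV)"
    by (simp add: nn_integral_count_space_nat)
  also have "\<dots> = (\<integral>\<^sup>+j. (\<integral>\<^sup>+i. f i j \<partial>count_space UNIV) \<partial>count_space UNIV)"
    by (rule nn_integral_count_space_nn_integral) auto
  also have "\<dots> = (\<Sum>j. \<Sum>i. f i j)"
    by (simp add: nn_integral_count_space_nat)
  finally show ?thesis .
qed

lemma suminf_shift_if: "(\<Sum>i. g (i + j) :: ennreal) = (\<Sum>i. if j \<le> i then g i else 0)"
proof -
  have bij: "bij_betw (\<lambda>i. i + j) UNIV {j..}"
    by (rule bij_betw_byWitness[where f'="\<lambda>i. i - j"]) auto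
  have "(\<Sum>i. g (i + j)) = (\<integral>\<^sup>+i. g (i + j) \<partial>count_space UNIV)"
    by (simp add: nn_integral_count_space_nat)
  also have "\<dots> = (\<integral>\<^sup>+i. g i \<partial>count_space {j..})"
    by (rule nn_integral_bij_count_space[OF bij])
  also have "\<dots> = (\<integral>\<^sup>+i. g i * indicator {j..} i \<partial>count_space UNIV)"
    by (rule nn_integral_count_space_indicator) auto
  also have "\<dots> = (\<Sum>i. if j \<le> i then g i else 0)"
    by (simp add: nn_integral_count_space_nat indicator_def) (rule arg_cong[where f=suminf], auto)
  finally show ?thesis .
qed

lemma tri_swap: "(\<Sum>i. \<Sum>j\<le>i. (f i j :: ennreal)) = (\<Sum>j. \<Sum>i. f (i + j) j)"
proof -
  have e: "(\<Sum>j. if j \<le> i then f i j else 0) = (\<Sum>j\<le>i. f i j)" for i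
  proof -
    have "(\<Sum>j. if j \<le> i then f i j else 0) = (\<Sum>j\<in>{..i}. if j \<le> i then f i j else 0)"
      by (rule suminf_finite) auto
    then show ?thesis by simp
  qed
  have "(\<Sum>i. \<Sum>j\<le>i. f i j) = (\<Sum>i. \<Sum>j. if j \<le> i then f i j else 0)"
    by (simp add: e)
  also have "\<dots> = (\<Sum>j. \<Sum>i. if j \<le> i then f i j else 0)"
    by (rule ennreal_suminf_swap)
  also have "\<dots> = (\<Sum>j. \<Sum>i. f (i + j) j)"
    by (rule arg_cong[where f=suminf], rule ext, rule suminf_shift_if[symmetric])
  finally show ?thesis .
qed


definition fp :: "nat list \<Rightarrow> nat list \<Rightarrow> real" where
  "fp p ms = (\<Prod>i<length p. 1 / real (ms ! i) ^ (p ! i))"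
definition Ch :: "nat list \<Rightarrow> nat list set" where
  "Ch p = {ms. length ms = length p \<and> sorted_wrt (>) ms \<and> (\<forall>m\<in>set ms. 0 < m)}"
definition Chx :: "nat list \<Rightarrow> nat \<Rightarrow> nat list set" where
  "Chx p x = {ms \<in> Ch p. hd ms = x}"

lemma mzv_alt: "mzv p = infsum (fp p) (Ch p)"
  unfolding mzv_def fp_def Ch_def by simp

lemma fp_nonneg: "0 \<le> fp p ms"
  unfolding fp_def by (auto intro!: prod_nonneg)

lemma mzv_nonneg: "0 \<le> mzv p"
  unfolding mzv_alt by (intro infsum_nonneg fp_nonneg)

lemma sorted_hd_ge: "sorted_wrt (>) ms \<Longrightarrow> y \<in> set ms \<Longrightarrow> y \<le> (hd ms :: nat)"
  by (induction ms) auto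

lemma Chx_single: "1 \<le> x \<Longrightarrow> Chx [a] x = {[x]}"
proof (intro set_eqI iffI)
  fix ms assume "ms \<in> Chx [a] x"
  then have "length ms = 1" "hd ms = x" unfolding Chx_def Ch_def by auto
  then show "ms \<in> {[x]}" by (cases ms) auto
qed (auto simp: Chx_def Ch_def)

lemma Chx_Cons:
  assumes "q \<noteq> []"
  shows "Chx (a # q) x = (\<lambda>ms. x # ms) ` (\<Union>z\<in>{1..<x}. Chx q z)"
proof (intro set_eqI iffI)
  fix ms assume "ms \<in> Chx (a # q) x"
  then have l: "length ms = Suc (length q)" and s: "sorted_wrt (>) ms" and p: "\<forall>m\<in>set ms. 0 < m" and h: "hd ms = x"
    unfolding Chx_def Ch_def by auto
  obtain ms' where ms: "ms = x # ms'" using l h by (cases ms) auto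
  have ne: "ms' \<noteq> []" using l ms assms by auto
  have "hd ms' \<in> set ms'" using ne by simp
  then have z: "hd ms' < x" "0 < hd ms'" using s p ms by auto
  have "ms' \<in> Chx q (hd ms')" using l s p ms unfolding Chx_def Ch_def by auto
  then show "ms \<in> (\<lambda>ms. x # ms) ` (\<Union>z\<in>{1..<x}. Chx q z)" using z ms by force
next
  fix ms assume "ms \<in> (\<lambda>ms. x # ms) ` (\<Union>z\<in>{1..<x}. Chx q z)"
  then obtain ms' z where ms: "ms = x # ms'" and z: "1 \<le> z" "z < x" and m: "ms' \<in> Chx q z" by auto
  have "\<forall>y\<in>set ms'. y < x"
    using m z sorted_hd_ge[of ms'] unfolding Chx_def Ch_def by fastforce
  then show "ms \<in> Chx (a # q) x" using m z ms unfolding Chx_def Ch_def by auto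
qed

lemma fp_Cons: "fp (a # q) (x # ms) = 1 / real x ^ a * fp q ms"
  unfolding fp_def length_Cons prod.lessThan_Suc_shift by simp

lemma Chx_sum:
  assumes "p \<noteq> []" "1 \<le> x"
  shows "finite (Chx p x) \<and> (\<Sum>ms\<in>Chx p x. fp p ms) = G 0 p x"
  using assms
proof (induction p arbitrary: x)
  case Nil
  then show ?case by simp
next
  case (Cons a q)
  show ?case
  proof (cases "q = []")
    case True
    then show ?thesis using Cons.prems by (simp add: Chx_single G_single fp_def)
  next
    case False
    let ?U = "\<Union>z\<in>{1..<x}. Chx q z"
    have fin: "\<And>z. z \<in> {1..<x} \<Longrightarrow> finite (Chx q z)" using Cons.IH False by auto
    have sums: "\<And>z. z \<in> {1..<x} \<Longrightarrow> (\<Sum>ms\<in>Chx q z. fp q ms) = G 0 q z" using Cons.IH False by auto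
    have finU: "finite ?U" using fin by auto
    have inj: "inj_on (\<lambda>ms. x # ms) ?U" by (auto simp: inj_on_def)
    have disj: "pairwise (\<lambda>z z'. Chx q z \<inter> Chx q z' = {}) {1..<x}"
      by (auto simp: pairwise_def Chx_def)
    have "(\<Sum>ms\<in>Chx (a # q) x. fp (a # q) ms) = (\<Sum>ms\<in>?U. fp (a # q) (x # ms))"
      unfolding Chx_Cons[OF False] by (subst sum.reindex[OF inj]) (simp add: o_def)
    also have "\<dots> = 1 / real x ^ a * (\<Sum>ms\<in>?U. fp q ms)"
      by (simp add: fp_Cons sum_distrib_left)
    also have "(\<Sum>ms\<in>?U. fp q ms) = (\<Sum>z\<in>{1..<x}. \<Sum>ms\<in>Chx q z. fp q ms)"
      using fin by (intro sum.UNION_disjoint) (auto simp: Chx_def)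
    also have "\<dots> = (\<Sum>z\<in>{1..<x}. G 0 q z)"
      using sums by simp
    also have "\<dots> = (\<Sum>z=1..x. (if z = x then 0 else 1) * G 0 q z)"
      by (rule sum.mono_neutral_cong_left) auto
    finally have "(\<Sum>ms\<in>Chx (a # q) x. fp (a # q) ms) = G 0 (a # q) x"
      using False by (simp add: G_Cons)
    moreover have "finite (Chx (a # q) x)" unfolding Chx_Cons[OF False] using finU by simp
    ultimately show ?thesis by simp
  qed
qed

lemma Ch_decomp:
  assumes "p \<noteq> []" "ms \<in> Ch p"
  shows "ms \<in> Chx p (hd ms) \<and> 1 \<le> hd ms"
proof -
  have "ms \<noteq> []" using assms unfolding Ch_def by auto
  then have "hd ms \<in> set ms" by simp
  then show ?thesis using assms unfolding Chx_def Ch_def by auto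
qed

lemma mzv_eq_suminf:
  assumes p: "p \<noteq> []" and summ: "summable (\<lambda>i. G 0 p (Suc i))"
  shows "mzv p = (\<Sum>i. G 0 p (Suc i))"
proof -
  have Gnn: "\<And>x. 0 \<le> G 0 p x" by (rule G_nonneg) simp
  have summCh: "fp p summable_on Ch p"
  proof (rule nonneg_bdd_above_summable_on)
    show "\<And>x. x \<in> Ch p \<Longrightarrow> 0 \<le> fp p x" by (rule fp_nonneg)
    show "bdd_above (sum (fp p) ` {F. F \<subseteq> Ch p \<and> finite F})"
    proof (rule bdd_aboveI2)
      fix F assume F: "F \<in> {F. F \<subseteq> Ch p \<and> finite F}"
      define N where "N = Max (insert 0 (hd ` F))"
      have sub: "F \<subseteq> (\<Union>x\<in>{1..N}. Chx p x)"
      proof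
        fix ms assume ms: "ms \<in> F"
        then have "ms \<in> Chx p (hd ms) \<and> 1 \<le> hd ms" using F Ch_decomp[OF p] by auto
        moreover have "hd ms \<le> N" unfolding N_def using F ms by (intro Max_ge) auto
        ultimately show "ms \<in> (\<Union>x\<in>{1..N}. Chx p x)" by auto
      qed
      have finx: "\<And>x. x \<in> {1..N} \<Longrightarrow> finite (Chx p x)" using Chx_sum[OF p] by auto
      have "sum (fp p) F \<le> sum (fp p) (\<Union>x\<in>{1..N}. Chx p x)"
        using sub finx by (intro sum_mono2 fp_nonneg) auto
      also have "\<dots> = (\<Sum>x\<in>{1..N}. \<Sum>ms\<in>Chx p x. fp p ms)"
        using finx by (intro sum.UNION_disjoint) (auto simp: Chx_def)
      also have "\<dots> = (\<Sum>x\<in>{1..N}. G 0 p x)"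
        using Chx_sum[OF p] by (intro sum.cong) auto
      also have "\<dots> = (\<Sum>i<N. G 0 p (Suc i))"
        by (simp add: sum.atLeast1_atMost_eq)
      also have "\<dots> \<le> (\<Sum>i. G 0 p (Suc i))"
        using summ Gnn by (intro sum_le_suminf) auto
      finally show "sum (fp p) F \<le> (\<Sum>i. G 0 p (Suc i))" .
    qed
  qed
  have bij: "bij_betw snd (Sigma {1..} (Chx p)) (Ch p)"
  proof (rule bij_betw_byWitness[where f'="\<lambda>ms. (hd ms, ms)"])
    show "\<forall>a\<in>Sigma {1..} (Chx p). (hd (snd a), snd a) = a" by (auto simp: Chx_def)
    show "\<forall>a'\<in>Ch p. snd (hd a', a') = a'" by simp
    show "snd ` Sigma {1..} (Chx p) \<subseteq> Ch p" by (auto simp: Chx_def)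
    show "(\<lambda>ms. (hd ms, ms)) ` Ch p \<subseteq> Sigma {1..} (Chx p)" using Ch_decomp[OF p] by auto
  qed
  have summS: "(\<lambda>xy. fp p (snd xy)) summable_on (Sigma {1..} (Chx p))"
    using summable_on_reindex_bij_betw[OF bij, of "fp p"] summCh by simp
  have "mzv p = infsum (\<lambda>xy. fp p (snd xy)) (Sigma {1..} (Chx p))"
    unfolding mzv_alt by (rule infsum_reindex_bij_betw[OF bij, symmetric])
  also have "\<dots> = infsum (\<lambda>x. infsum (\<lambda>ms. fp p (snd (x, ms))) (Chx p x)) {1..}"
    by (rule infsum_Sigma_banach[OF summS, symmetric])
  also have "\<dots> = infsum (\<lambda>x. G 0 p x) {1..}"
    using Chx_sum[OF p] by (intro infsum_cong) auto
  also have "\<dots> = infsum (\<lambda>i. G 0 p (Suc i)) UNIV"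
  proof -
    have b: "bij_betw Suc UNIV {1..}"
      by (rule bij_betw_byWitness[where f'="\<lambda>i. i - 1"]) auto
    show ?thesis by (rule infsum_reindex_bij_betw[OF b, symmetric])
  qed
  also have "\<dots> = (\<Sum>i. G 0 p (Suc i))"
    using summ Gnn by (intro infsumI sums_nonneg_imp_has_sum summable_sums) auto
  finally show ?thesis .
qed

lemma mzv_eq:
  assumes "p \<noteq> []" "2 \<le> hd p" "\<forall>y\<in>set p. 1 \<le> y"
  shows "ennreal (mzv p) = SSum (G 0 p)"
proof -
  have fin: "SSum (G 0 p) < top" using FIN[OF assms] by simp
  have nn: "\<And>x. 0 \<le> G 0 p x" by (rule G_nonneg) simp
  have summ: "summable (\<lambda>i. G 0 p (Suc i))"
    using fin nn unfolding SSum_def by (intro summable_suminf_not_top) auto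
  show ?thesis
    using mzv_eq_suminf[OF assms(1) summ] SSum_summable[OF _ summ] nn by simp
qed

lemma poly_zeta_t: "poly (zeta_t c) t = sum_list (map (\<lambda>(p, s). t ^ s * mzv p) (combos c))"
proof -
  have "\<And>L. poly (sum_list (map (\<lambda>(p, s). monom (mzv p) s) L)) t = sum_list (map (\<lambda>(p, s). t ^ s * mzv p) L)"
    subgoal for L by (induction L) (auto simp: poly_monom)
    done
  then show ?thesis unfolding zeta_t_def by simp
qed

lemma SSum_list:
  assumes "\<forall>q\<in>set L. ennreal (mzv (fst q)) = SSum (G 0 (fst q))" "0 \<le> t"
  shows "SSum (\<lambda>x. sum_list (map (\<lambda>(p, s). t ^ s * G 0 p x) L)) = ennreal (sum_list (map (\<lambda>(p, s). t ^ s * mzv p) L))"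
  using assms(1)
proof (induction L)
  case Nil
  then show ?case by (simp add: SSum_def)
next
  case (Cons q L)
  obtain p s where q: "q = (p, s)" by force
  have nn1: "\<And>x. 0 \<le> t ^ s * G 0 p x" using assms(2) by (intro mult_nonneg_nonneg zero_le_power G_nonneg) auto
  have nn2: "\<And>x. 0 \<le> sum_list (map (\<lambda>(p, s). t ^ s * G 0 p x) L)"
    using assms(2) by (intro sum_list_nonneg) (auto intro!: mult_nonneg_nonneg zero_le_power G_nonneg)
  have nn3: "0 \<le> sum_list (map (\<lambda>(p, s). t ^ s * mzv p) L)"
    using assms(2) by (intro sum_list_nonneg) (auto intro!: mult_nonneg_nonneg zero_le_power mzv_nonneg)
  have "SSum (\<lambda>x. sum_list (map (\<lambda>(p, s). t ^ s * G 0 p x) (q # L))) =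
        SSum (\<lambda>x. t ^ s * G 0 p x + sum_list (map (\<lambda>(p, s). t ^ s * G 0 p x) L))"
    unfolding q by simp
  also have "\<dots> = SSum (\<lambda>x. t ^ s * G 0 p x) + SSum (\<lambda>x. sum_list (map (\<lambda>(p, s). t ^ s * G 0 p x) L))"
    using nn1 nn2 by (intro SSum_add) auto
  also have "SSum (\<lambda>x. t ^ s * G 0 p x) = ennreal (t ^ s) * SSum (G 0 p)"
    using assms(2) by (intro SSum_cmult) (auto intro: G_nonneg)
  also have "SSum (G 0 p) = ennreal (mzv p)" using Cons.prems q by simp
  also have "SSum (\<lambda>x. sum_list (map (\<lambda>(p, s). t ^ s * G 0 p x) L)) = ennreal (sum_list (map (\<lambda>(p, s). t ^ s * mzv p) L))"
    using Cons by simp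
  also have "ennreal (t ^ s) * ennreal (mzv p) + ennreal (sum_list (map (\<lambda>(p, s). t ^ s * mzv p) L)) =
             ennreal (sum_list (map (\<lambda>(p, s). t ^ s * mzv p) (q # L)))"
    using assms(2) nn3 mzv_nonneg[of p] unfolding q by (simp add: ennreal_mult ennreal_plus)
  finally show ?case .
qed

lemma zeta_t_eq:
  assumes "c \<noteq> []" "2 \<le> hd c" "\<forall>y\<in>set c. 1 \<le> y" "0 \<le> t" "t \<le> 1"
  shows "ennreal (poly (zeta_t c) t) = SSum (G t c)" "0 \<le> poly (zeta_t c) t"
proof -
  have adm: "\<forall>q\<in>set (combos c). ennreal (mzv (fst q)) = SSum (G 0 (fst q))"
  proof
    fix q assume q: "q \<in> set (combos c)"
    have pr: "fst q \<noteq> [] \<and> hd c \<le> hd (fst q) \<and> ((\<forall>x\<in>set c. 1 \<le> x) \<longrightarrow> (\<forall>x\<in>set (fst q). 1 \<le> x))"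
      by (rule combos_props[OF assms(1) q])
    then have "\<forall>x\<in>set (fst q). 1 \<le> x" using assms(3) by blast
    moreover have "fst q \<noteq> []" "2 \<le> hd (fst q)" using pr assms(2) by auto
    ultimately show "ennreal (mzv (fst q)) = SSum (G 0 (fst q))" by (intro mzv_eq) auto
  qed
  have "SSum (G t c) = SSum (\<lambda>x. sum_list (map (\<lambda>(p, s). t ^ s * G 0 p x) (combos c)))"
    by (intro SSum_cong G_combos[OF assms(1)])
  also have "\<dots> = ennreal (poly (zeta_t c) t)"
    unfolding poly_zeta_t by (rule SSum_list[OF adm assms(4)])
  finally show "ennreal (poly (zeta_t c) t) = SSum (G t c)" by simp
  show "0 \<le> poly (zeta_t c) t"
    unfolding poly_zeta_t using assms(4)
    by (intro sum_list_nonneg) (auto intro!: mult_nonneg_nonneg zero_le_power mzv_nonneg)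
qed


lemma ennreal_suminf_head: "(\<Sum>i. f i :: ennreal) = f 0 + (\<Sum>i. f (Suc i))"
proof -
  have "f sums ((\<Sum>i. f (Suc i)) + f 0)"
    by (rule sums_Suc[OF summable_sums[OF summableI]])
  then show ?thesis by (simp add: sums_unique[symmetric] add.commute)
qed

lemma key_poly:
  fixes u v w :: real
  assumes h: "w * (v - u) = u * v"
  shows "(\<Sum>j=1..b. u ^ (Suc b + 1 - j) * v ^ j) + u ^ Suc b * w = u * v ^ b * w"
proof (induction b)
  case 0
  then show ?case by simp
next
  case (Suc b)
  have h': "u * w + u * v = v * w" using h by (simp add: algebra_simps)
  have e: "(\<Sum>j=1..Suc b. u ^ (Suc (Suc b) + 1 - j) * v ^ j) = u * ((\<Sum>j=1..b. u ^ (Suc b + 1 - j) * v ^ j) + u * v ^ Suc b)"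
  proof -
    have "(\<Sum>j=1..Suc b. u ^ (Suc (Suc b) + 1 - j) * v ^ j) = (\<Sum>j=1..Suc b. u * (u ^ (Suc b + 1 - j) * v ^ j))"
    proof (rule sum.cong[OF refl])
      fix j assume "j \<in> {1..Suc b}"
      then have "Suc (Suc b) + 1 - j = Suc (Suc b + 1 - j)" by auto
      then show "u ^ (Suc (Suc b) + 1 - j) * v ^ j = u * (u ^ (Suc b + 1 - j) * v ^ j)" by simp
    qed
    also have "\<dots> = u * (\<Sum>j=1..Suc b. u ^ (Suc b + 1 - j) * v ^ j)" by (rule sum_distrib_left[symmetric])
    also have "(\<Sum>j=1..Suc b. u ^ (Suc b + 1 - j) * v ^ j) = (\<Sum>j=1..b. u ^ (Suc b + 1 - j) * v ^ j) + u * v ^ Suc b"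
      by simp
    finally show ?thesis .
  qed
  have "(\<Sum>j=1..Suc b. u ^ (Suc (Suc b) + 1 - j) * v ^ j) + u ^ Suc (Suc b) * w
      = u * ((u * v ^ b * w - u ^ Suc b * w) + u * v ^ Suc b) + u ^ Suc (Suc b) * w"
  proof -
    have S: "(\<Sum>j=1..b. u ^ (Suc b + 1 - j) * v ^ j) = u * v ^ b * w - u ^ Suc b * w" using Suc by linarith
    show ?thesis unfolding e S by (simp add: algebra_simps)
  qed
  also have "\<dots> = u * v ^ b * (u * w + u * v)" by (simp add: algebra_simps)
  also have "\<dots> = u * v ^ Suc b * w" unfolding h' by (simp add: algebra_simps)
  finally show ?case .
qed

lemma key_identity:
  assumes "y < x" "1 \<le> y"
  shows "(\<Sum>j=1..b. 1 / real x ^ (Suc b + 1 - j) * (1 / real y ^ j)) + 1 / real x ^ Suc b / (real x - real y)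
       = 1 / real x * (1 / real y ^ b) / (real x - real y)"
proof -
  have h: "(1 / (real x - real y)) * (1 / real y - 1 / real x) = (1 / real x) * (1 / real y)"
    using assms by (simp add: field_simps)
  from key_poly[OF h, of b] show ?thesis
    by (simp add: power_one_over divide_inverse mult.assoc power_inverse)
qed

lemma harm_shift_sum: "(\<Sum>i<N. 1 / real (m + Suc i)) = harm (m + N) - harm m"
  by (induction N) (auto simp: harm_Suc divide_inverse)

lemma harm_diff_bnd: "0 \<le> harm (m + k) - (harm m :: real) \<and> harm (m + k) - (harm m :: real) \<le> real k / real (Suc m)"
proof (induction k)
  case 0
  then show ?case by simp
next
  case (Suc k)
  have e: "harm (m + Suc k) - harm m = (harm (m + k) - harm m) + 1 / real (Suc (m + k))"
    by (simp add: harm_Suc divide_inverse)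
  have b1: "1 / real (Suc (m + k)) \<le> 1 / real (Suc m)" by (intro divide_left_mono) auto
  have b0: "0 \<le> 1 / real (Suc (m + k))" by simp
  have d: "real (Suc k) / real (Suc m) = real k / real (Suc m) + 1 / real (Suc m)"
    by (simp add: add_divide_distrib)
  show ?case unfolding d using Suc e b0 b1 by linarith
qed

lemma telescope:
  assumes "1 \<le> y" "y \<le> z"
  shows "(\<lambda>i. 1 / (real (z + Suc i) * (real (z + Suc i) - real y))) sums ((harm z - harm (z - y)) / real y)"
proof -
  define d where "d = z - y"
  have zd: "z = d + y" using assms unfolding d_def by auto
  have base: "(\<lambda>i. 1 / real (d + Suc i) - 1 / real (z + Suc i)) sums (harm z - harm d)"
    unfolding sums_def
  proof -
    have ps: "(\<Sum>i<N. 1 / real (d + Suc i) - 1 / real (z + Suc i)) = (harm z - harm d) - (harm (z + N) - harm (d + N))" for N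
    proof -
      have "(\<Sum>i<N. 1 / real (d + Suc i) - 1 / real (z + Suc i)) = (\<Sum>i<N. 1 / real (d + Suc i)) - (\<Sum>i<N. 1 / real (z + Suc i))"
        by (rule sum_subtractf)
      also have "\<dots> = (harm (d + N) - harm d) - (harm (z + N) - harm z)"
        by (simp only: harm_shift_sum)
      finally show ?thesis by simp
    qed
    have zN: "\<And>N. z + N = (d + N) + y" using zd by simp
    have lim: "(\<lambda>N. harm (z + N) - harm (d + N) :: real) \<longlonglongrightarrow> 0"
      unfolding zN
    proof (rule tendsto_sandwich[where f="\<lambda>_. 0" and h="\<lambda>N. real y * inverse (real (Suc N))"])
      have hd: "\<And>N. 0 \<le> harm (d + N + y) - (harm (d + N) :: real) \<and> harm (d + N + y) - harm (d + N) \<le> real y / real (Suc (d + N))"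
        by (rule harm_diff_bnd)
      have h2: "\<And>N. real y / real (Suc (d + N)) \<le> real y * inverse (real (Suc N))"
        by (simp add: divide_inverse) (intro mult_left_mono le_imp_inverse_le, auto)
      show "\<forall>\<^sub>F N in sequentially. 0 \<le> harm (d + N + y) - (harm (d + N) :: real)"
        by (rule always_eventually) (use hd in blast)
      show "\<forall>\<^sub>F N in sequentially. harm (d + N + y) - (harm (d + N) :: real) \<le> real y * inverse (real (Suc N))"
        by (rule always_eventually) (use hd h2 order_trans in blast)
      show "(\<lambda>N. 0) \<longlonglongrightarrow> (0::real)" by simp
      show "(\<lambda>N. real y * inverse (real (Suc N))) \<longlonglongrightarrow> 0"
        by (rule tendsto_mult_right_zero[OF LIMSEQ_inverse_real_of_nat])
    qed
    show "(\<lambda>N. \<Sum>i<N. 1 / real (d + Suc i) - 1 / real (z + Suc i)) \<longlonglongrightarrow> harm z - harm d"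
      unfolding ps using tendsto_diff[OF tendsto_const lim, of "harm z - harm d"] by simp
  qed
  have "(\<lambda>i. (1 / real y) * (1 / real (d + Suc i) - 1 / real (z + Suc i))) sums ((1 / real y) * (harm z - harm d))"
    by (rule sums_mult[OF base])
  moreover have "(1 / real y) * (1 / real (d + Suc i) - 1 / real (z + Suc i)) = 1 / (real (z + Suc i) * (real (z + Suc i) - real y))" for i
    using assms unfolding zd by (simp add: field_simps)
  ultimately show ?thesis unfolding d_def by simp
qed

lemma HS:
  assumes "1 \<le> z" "z \<le> x"
  shows "(\<Sum>y=1..z-1. 1 / (real x - real y)) = harm (x - 1) - harm (x - z)"
  using assms
proof (induction z rule: dec_induct)
  case base
  then show ?case by simp
next
  case (step z)
  have "(\<Sum>y=1..Suc z - 1. 1 / (real x - real y)) = (\<Sum>y=1..z-1. 1 / (real x - real y)) + 1 / (real x - real z)"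
    using step by (cases z) auto
  also have "x - z = Suc (x - Suc z)" using step by auto
  then have "harm (x - z) = harm (x - Suc z) + 1 / (real x - real z)"
    using step by (simp add: harm_Suc divide_inverse of_nat_diff)
  ultimately show ?case using step by simp
qed

lemma HV:
  assumes "1 \<le> z" "z \<le> x"
  shows "(\<Sum>y\<in>{y\<in>{1..x-1}. y \<le> z}. (if z = y then t else 1) / (real x - real y))
       = harm (x - 1) - harm (x - z) + (if z < x then t / (real x - real z) else 0)"
proof (cases "z < x")
  case True
  have set: "{y\<in>{1..x-1}. y \<le> z} = insert z {1..z-1}" using True assms by auto
  have "(\<Sum>y\<in>{y\<in>{1..x-1}. y \<le> z}. (if z = y then t else 1) / (real x - real y))
      = t / (real x - real z) + (\<Sum>y=1..z-1. (if z = y then t else 1) / (real x - real y))"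
    unfolding set by (subst sum.insert) auto
  also have "(\<Sum>y=1..z-1. (if z = y then t else 1) / (real x - real y)) = (\<Sum>y=1..z-1. 1 / (real x - real y))"
    by (intro sum.cong) auto
  finally show ?thesis using HS[OF assms] True by simp
next
  case False
  then have zx: "z = x" using assms by auto
  have set: "{y\<in>{1..x-1}. y \<le> z} = {1..z-1}" using zx by auto
  have "(\<Sum>y\<in>{y\<in>{1..x-1}. y \<le> z}. (if z = y then t else 1) / (real x - real y)) = (\<Sum>y=1..z-1. 1 / (real x - real y))"
    unfolding set by (intro sum.cong) auto
  then show ?thesis using HS[OF assms] False by simp
qed


definition Pc :: "real \<Rightarrow> nat list \<Rightarrow> ennreal" where
  "Pc t c = SSum (\<lambda>x. \<Sum>y=1..x-1. K t (c @ [0]) x y / (real x - real y))"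
definition Qc :: "real \<Rightarrow> nat list \<Rightarrow> ennreal" where
  "Qc t c = SSum (\<lambda>x. \<Sum>y=1..x-1. K t (1 # tl c @ [hd c - 1]) x y / (real x - real y))"
definition Rc :: "real \<Rightarrow> nat list \<Rightarrow> ennreal" where
  "Rc t d = SSum (\<lambda>x. \<Sum>z=1..x. K t d x z * (if z < x then 1 - t else 1) / real x)"
definition Zk :: "nat \<Rightarrow> ennreal" where
  "Zk k = SSum (\<lambda>x. 1 / real x ^ (k + 1))"
definition Ac :: "real \<Rightarrow> nat list \<Rightarrow> ennreal" where
  "Ac t c = (\<Sum>j=1..hd c - 1. SSum (G t ((hd c + 1 - j) # tl c @ [j])))"

definition Vf :: "real \<Rightarrow> nat \<Rightarrow> nat \<Rightarrow> real" where
  "Vf t x z = harm (x - 1) - harm (x - z) + (if z < x then t / (real x - real z) else 0)"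

lemma sum_last:
  fixes x :: nat
  assumes "1 \<le> x"
  shows "(\<Sum>y=1..x. g y) = (\<Sum>y=1..x-1. g y) + (g x :: 'a::comm_monoid_add)"
proof -
  obtain n where n: "x = Suc n" using assms by (cases x) auto
  show ?thesis unfolding n by (simp add: add.commute)
qed

lemma K_ends: "K t (b # m @ [e]) x y = 1 / real x ^ b * (1 / real y ^ e * K t (0 # m @ [0]) x y)"
proof -
  have "K t (b # m @ [e]) x y = 1 / real x ^ b * K t (0 # m @ [e]) x y"
    by (rule K_top) simp
  also have "K t (0 # m @ [e]) x y = 1 / real y ^ e * K t (0 # m @ [0]) x y"
    using K_bot[of t "0 # m" e x y] by simp
  finally show ?thesis .
qed

lemma Vf_nonneg: "0 \<le> t \<Longrightarrow> 1 \<le> z \<Longrightarrow> z \<le> x \<Longrightarrow> 0 \<le> Vf t x z"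
  unfolding Vf_def using harm_mono[of "x - z" "x - 1"] by auto

lemma Vf_le: "0 \<le> t \<Longrightarrow> t \<le> 1 \<Longrightarrow> 1 \<le> z \<Longrightarrow> z \<le> x \<Longrightarrow> Vf t x z \<le> harm x"
proof -
  assume a: "0 \<le> t" "t \<le> 1" "1 \<le> z" "z \<le> x"
  have "(if z < x then t / (real x - real z) else 0) \<le> harm (x - z)"
  proof (cases "z < x")
    case True
    have "t / (real x - real z) \<le> 1 / (real x - real z)" using a True by (intro divide_right_mono) auto
    also have "\<dots> \<le> 1" using True by (auto simp: field_simps)
    also have "1 \<le> (harm (x - z) :: real)" using True by (intro harm_ge1) auto
    finally show ?thesis using True by simp
  qed (simp add: harm_nonneg)
  then have "Vf t x z \<le> harm (x - 1)" unfolding Vf_def by simp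
  also have "\<dots> \<le> harm x" by (intro harm_mono) auto
  finally show ?thesis .
qed

lemma P_expand:
  assumes "d \<noteq> []"
  shows "Pc t d = SSum (\<lambda>x. \<Sum>z=1..x. K t d x z * Vf t x z)"
  unfolding Pc_def
proof (rule SSum_cong)
  fix x :: nat assume x: "1 \<le> x"
  have "(\<Sum>y=1..x-1. K t (d @ [0]) x y / (real x - real y))
      = (\<Sum>y\<in>{1..x-1}. \<Sum>z\<in>{z\<in>{1..x}. y \<le> z}. (if z = y then t else 1) * K t d x z / (real x - real y))"
  proof (rule sum.cong[OF refl])
    fix y assume y: "y \<in> {1..x-1}"
    have s: "{z\<in>{1..x}. y \<le> z} = {y..x}" using y by auto
    show "K t (d @ [0]) x y / (real x - real y) = (\<Sum>z\<in>{z\<in>{1..x}. y \<le> z}. (if z = y then t else 1) * K t d x z / (real x - real y))"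
      unfolding s using K_botexp[OF assms, of y t 0 x] y by (simp add: sum_divide_distrib)
  qed
  also have "\<dots> = (\<Sum>z\<in>{1..x}. \<Sum>y\<in>{y\<in>{1..x-1}. y \<le> z}. (if z = y then t else 1) * K t d x z / (real x - real y))"
    by (rule sum.swap_restrict) auto
  also have "\<dots> = (\<Sum>z=1..x. K t d x z * Vf t x z)"
  proof (rule sum.cong[OF refl])
    fix z assume z: "z \<in> {1..x}"
    have "(\<Sum>y\<in>{y\<in>{1..x-1}. y \<le> z}. (if z = y then t else 1) * K t d x z / (real x - real y))
        = K t d x z * (\<Sum>y\<in>{y\<in>{1..x-1}. y \<le> z}. (if z = y then t else 1) / (real x - real y))"
      unfolding sum_distrib_left by (intro sum.cong refl) (simp add: field_simps)
    also have "\<dots> = K t d x z * Vf t x z" unfolding Vf_def using HV z by auto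
    finally show "(\<Sum>y\<in>{y\<in>{1..x-1}. y \<le> z}. (if z = y then t else 1) * K t d x z / (real x - real y)) = K t d x z * Vf t x z" .
  qed
  finally show "(\<Sum>y=1..x-1. K t (d @ [0]) x y / (real x - real y)) = (\<Sum>z=1..x. K t d x z * Vf t x z)" .
qed

lemma E5:
  assumes "c \<noteq> []" "2 \<le> hd c" "\<forall>y\<in>set c. 1 \<le> y" "0 \<le> t" "t \<le> 1"
  shows "Pc t c < top"
  unfolding P_expand[OF assms(1)]
proof (rule SSum_fin)
  show "summable (\<lambda>i. harm (Suc i) ^ length c / real (Suc i) ^ 2)" by (rule summable_harm_pow)
next
  fix x :: nat assume x: "1 \<le> x"
  show "0 \<le> harm x ^ length c / real x ^ 2" by (intro divide_nonneg_nonneg zero_le_power harm_nonneg) auto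
  have tl: "\<forall>y\<in>set (tl c). 1 \<le> y" using assms(1,3) by (cases c) auto
  have "(\<Sum>z=1..x. K t c x z * Vf t x z) \<le> (\<Sum>z=1..x. K t c x z * harm x)"
    using assms(4,5) by (intro sum_mono mult_left_mono Vf_le K_nonneg) auto
  also have "\<dots> = harm x * G t c x" unfolding G_def by (simp add: sum_distrib_left mult.commute)
  also have "\<dots> \<le> harm x * (harm x ^ (length c - 1) / real x ^ hd c)"
    using G_le[OF assms(1,4,5) tl x] by (intro mult_left_mono harm_nonneg) auto
  also have "\<dots> \<le> harm x * (harm x ^ (length c - 1) / real x ^ 2)"
    using x assms(2) by (intro mult_left_mono divide_left_mono power_increasing) (auto intro!: zero_le_power harm_nonneg)
  also have "\<dots> = harm x ^ length c / real x ^ 2"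
    using assms(1) by (cases c) auto
  finally show "(\<Sum>z=1..x. K t c x z * Vf t x z) \<le> harm x ^ length c / real x ^ 2" .
qed

lemma E4:
  assumes "d \<noteq> []" "0 \<le> t" "t \<le> 1"
  shows "Rc t d = ennreal (1 - t) * SSum (G t ((hd d + 1) # tl d)) + ennreal (t ^ length d) * Zk (sum_list d)"
proof -
  have dd: "d = hd d # tl d" using assms(1) by simp
  have pw: "(\<Sum>z=1..x. K t d x z * (if z < x then 1 - t else 1) / real x)
      = (1 - t) * G t ((hd d + 1) # tl d) x + t ^ length d * (1 / real x ^ (sum_list d + 1))" if x: "1 \<le> x" for x
  proof -
    have "(\<Sum>z=1..x. K t d x z * (if z < x then 1 - t else 1) / real x)
        = (\<Sum>z=1..x. (1 - t) * (K t d x z / real x) + (if z = x then t * K t d x z / real x else 0))"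
      by (intro sum.cong) (auto simp: field_simps)
    also have "\<dots> = (1 - t) * (G t d x / real x) + t * K t d x x / real x"
      using x by (simp add: sum.distrib sum_distrib_left[symmetric] sum_divide_distrib[symmetric] G_def)
    also have "G t d x / real x = G t ((hd d + 1) # tl d) x"
      using G_bump[of t 1 "hd d" "tl d" x] dd by (simp add: add.commute)
    also have "t * K t d x x / real x = t ^ length d * (1 / real x ^ (sum_list d + 1))"
      using K_diag[OF assms(1) x, of t] assms(1) by (cases "length d") (auto simp: field_simps)
    finally show ?thesis .
  qed
  have "Rc t d = SSum (\<lambda>x. (1 - t) * G t ((hd d + 1) # tl d) x + t ^ length d * (1 / real x ^ (sum_list d + 1)))"
    unfolding Rc_def by (rule SSum_cong) (rule pw)
  also have "\<dots> = SSum (\<lambda>x. (1 - t) * G t ((hd d + 1) # tl d) x) + SSum (\<lambda>x. t ^ length d * (1 / real x ^ (sum_list d + 1)))"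
    using assms by (intro SSum_add) (auto intro!: mult_nonneg_nonneg G_nonneg)
  also have "SSum (\<lambda>x. (1 - t) * G t ((hd d + 1) # tl d) x) = ennreal (1 - t) * SSum (G t ((hd d + 1) # tl d))"
    using assms by (intro SSum_cmult) (auto intro: G_nonneg)
  also have "SSum (\<lambda>x. t ^ length d * (1 / real x ^ (sum_list d + 1))) = ennreal (t ^ length d) * Zk (sum_list d)"
    unfolding Zk_def using assms by (intro SSum_cmult) auto
  finally show ?thesis .
qed

lemma E12:
  assumes "c \<noteq> []" "\<forall>y\<in>set c. 1 \<le> y" "0 \<le> t"
  shows "Ac t c + Pc t c = Qc t c + of_nat (hd c - 1) * (ennreal (t ^ length c) * Zk (sum_list c))"
proof -
  define a where "a = hd c"
  define m where "m = tl c"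
  have c: "c = a # m" unfolding a_def m_def using assms(1) by simp
  have a1: "1 \<le> a" using assms(2) c by auto
  define cj where "cj j = (a + 1 - j) # m @ [j]" for j
  have Ac: "Ac t c = SSum (\<lambda>x. \<Sum>j=1..a-1. G t (cj j) x)"
    unfolding Ac_def cj_def a_def m_def using assms(3) by (intro SSum_sum[symmetric]) (auto intro: G_nonneg)
  define f where "f x = (\<Sum>j=1..a-1. G t (cj j) x)" for x
  define p where "p x = (\<Sum>y=1..x-1. K t (c @ [0]) x y / (real x - real y))" for x
  define q where "q x = (\<Sum>y=1..x-1. K t (1 # m @ [a - 1]) x y / (real x - real y))" for x
  define D where "D x = real (a - 1) * t ^ length c * (1 / real x ^ (sum_list c + 1))" for x
  have pw: "f x + p x = q x + D x" if x: "1 \<le> x" for x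
  proof -
    have diag: "K t (cj j) x x = t ^ length c * (1 / real x ^ (sum_list c + 1))" if j: "j \<in> {1..a-1}" for j
    proof -
      have L: "length (cj j) - 1 = length c" unfolding cj_def c by simp
      have S: "sum_list (cj j) = sum_list c + 1" using j a1 unfolding cj_def c by (simp; arith)
      have "K t (cj j) x x = t ^ (length (cj j) - 1) / real x ^ (sum_list (cj j))"
        by (rule K_diag) (use x in \<open>auto simp: cj_def\<close>)
      then show ?thesis unfolding L S by simp
    qed
    have "f x = (\<Sum>j=1..a-1. (\<Sum>y=1..x-1. K t (cj j) x y) + K t (cj j) x x)"
      unfolding f_def G_def by (intro sum.cong refl sum_last[OF x])
    also have "\<dots> = (\<Sum>y=1..x-1. \<Sum>j=1..a-1. K t (cj j) x y) + D x"
      by (simp add: sum.distrib diag D_def) (rule sum.swap)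
    finally have fx: "f x = (\<Sum>y=1..x-1. \<Sum>j=1..a-1. K t (cj j) x y) + D x" .
    have py: "(\<Sum>j=1..a-1. K t (cj j) x y) + K t (c @ [0]) x y / (real x - real y)
        = K t (1 # m @ [a - 1]) x y / (real x - real y)" if y: "y \<in> {1..x-1}" for y
    proof -
      define M where "M = K t (0 # m @ [0]) x y"
      obtain b where b: "a = Suc b" using a1 by (cases a) auto
      have yx: "y < x" "1 \<le> y" using y x by auto
      have e1: "(\<Sum>j=1..a-1. K t (cj j) x y) = M * (\<Sum>j=1..b. 1 / real x ^ (Suc b + 1 - j) * (1 / real y ^ j))"
      proof -
        have "(\<Sum>j=1..a-1. K t (cj j) x y) = (\<Sum>j=1..b. M * (1 / real x ^ (Suc b + 1 - j) * (1 / real y ^ j)))"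
        proof (rule sum.cong)
          show "{1..a-1} = {1..b}" using b by simp
        next
          fix j assume "j \<in> {1..b}"
          show "K t (cj j) x y = M * (1 / real x ^ (Suc b + 1 - j) * (1 / real y ^ j))"
            using K_ends[of t "a + 1 - j" m j x y] b unfolding cj_def M_def by (simp add: mult_ac)
        qed
        then show ?thesis by (simp only: sum_distrib_left)
      qed
      have e2: "K t (c @ [0]) x y = M * (1 / real x ^ Suc b)"
        unfolding c M_def b using K_ends[of t "Suc b" m 0 x y] by simp
      have e3: "K t (1 # m @ [a - 1]) x y = M * (1 / real x * (1 / real y ^ b))"
        unfolding M_def b using K_ends[of t 1 m b x y] by simp
      have KI: "(\<Sum>j=1..b. 1 / real x ^ (Suc b + 1 - j) * (1 / real y ^ j)) + 1 / real x ^ Suc b / (real x - real y)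
       = 1 / real x * (1 / real y ^ b) / (real x - real y)" by (rule key_identity[OF yx])
      have "M * ((\<Sum>j=1..b. 1 / real x ^ (Suc b + 1 - j) * (1 / real y ^ j)) + 1 / real x ^ Suc b / (real x - real y))
       = M * (1 / real x * (1 / real y ^ b) / (real x - real y))" unfolding KI ..
      then have "M * (\<Sum>j=1..b. 1 / real x ^ (Suc b + 1 - j) * (1 / real y ^ j)) + M * (1 / real x ^ Suc b) / (real x - real y)
       = M * (1 / real x * (1 / real y ^ b)) / (real x - real y)" by (simp only: distrib_left times_divide_eq_right)
      then show ?thesis unfolding e1 e2 e3 .
    qed
    have "f x + p x = (\<Sum>y=1..x-1. (\<Sum>j=1..a-1. K t (cj j) x y) + K t (c @ [0]) x y / (real x - real y)) + D x"
      unfolding fx p_def by (simp add: sum.distrib)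
    also have "\<dots> = q x + D x" unfolding q_def using py by simp
    finally show ?thesis .
  qed
  have nnK: "\<And>x y. y \<in> {1..x-1} \<Longrightarrow> 0 \<le> K t cc x y / (real x - real y)" for cc
    using assms(3) by (auto intro!: divide_nonneg_nonneg K_nonneg)
  have "Ac t c + Pc t c = SSum f + SSum p" unfolding Ac Pc_def f_def p_def by simp
  also have "\<dots> = SSum (\<lambda>x. f x + p x)"
    using assms(3) unfolding f_def p_def by (intro SSum_add[symmetric]) (auto intro!: sum_nonneg G_nonneg nnK)
  also have "\<dots> = SSum (\<lambda>x. q x + D x)" by (intro SSum_cong pw)
  also have "\<dots> = SSum q + SSum D"
    using assms(3) unfolding q_def D_def by (intro SSum_add) (auto intro!: sum_nonneg nnK)
  also have "SSum q = Qc t c" unfolding q_def Qc_def a_def m_def by simp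
  also have "SSum D = ennreal (real (a - 1) * t ^ length c) * Zk (sum_list c)"
    unfolding D_def Zk_def using assms(3) by (subst SSum_cmult) auto
  also have "ennreal (real (a - 1) * t ^ length c) = of_nat (a - 1) * ennreal (t ^ length c)"
    using assms(3) by (simp add: ennreal_mult ennreal_of_nat_eq_real_of_nat)
  finally show ?thesis unfolding a_def by (simp add: mult.assoc)
qed


definition Uf :: "real \<Rightarrow> nat \<Rightarrow> nat \<Rightarrow> real" where
  "Uf t z y = harm z - harm (z - y) + (if y < z then t * real y / (real z * (real z - real y)) else 0)"

lemma Q_step1:
  assumes "1 \<le> x" "ms \<noteq> []"
  shows "(\<Sum>y=1..x-1. K t (1 # ms) x y / (real x - real y)) =
         (\<Sum>z=1..x. \<Sum>y=1..z. (if y < x then (if z = x then t else 1) * K t ms z y / (real x * (real x - real y)) else 0))"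
proof -
  have "(\<Sum>y=1..x-1. K t (1 # ms) x y / (real x - real y)) =
        (\<Sum>y\<in>{1..x-1}. \<Sum>z\<in>{1..x}. (if z = x then t else 1) * K t ms z y / (real x * (real x - real y)))"
    using assms(2) by (simp add: K_Cons sum_distrib_left sum_divide_distrib)
  also have "\<dots> = (\<Sum>z\<in>{1..x}. \<Sum>y\<in>{1..x-1}. (if z = x then t else 1) * K t ms z y / (real x * (real x - real y)))"
    by (rule sum.swap)
  also have "\<dots> = (\<Sum>z=1..x. \<Sum>y=1..z. (if y < x then (if z = x then t else 1) * K t ms z y / (real x * (real x - real y)) else 0))"
  proof (rule sum.cong[OF refl])
    fix z assume z: "z \<in> {1..x}"
    define h where "h y = (if z = x then t else 1) * K t ms z y / (real x * (real x - real y))" for y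
    have h0: "\<And>y. z < y \<Longrightarrow> h y = 0" unfolding h_def by (simp add: K_zero)
    have s1: "{y\<in>{1..x}. y < x} = {1..x-1}" using assms(1) by auto
    have s2: "{y\<in>{1..x}. y \<le> z} = {1..z}" using z by auto
    have "(\<Sum>y\<in>{1..x-1}. h y) = (\<Sum>y\<in>{1..x}. if y < x then h y else 0)"
      unfolding s1[symmetric] by (rule sum.inter_filter) simp
    also have "\<dots> = (\<Sum>y\<in>{1..x}. if y \<le> z then (if y < x then h y else 0) else 0)"
      using h0 by (intro sum.cong) auto
    also have "\<dots> = (\<Sum>y\<in>{1..z}. if y < x then h y else 0)"
      unfolding s2[symmetric] by (rule sum.inter_filter[symmetric]) simp
    finally show "(\<Sum>y\<in>{1..x-1}. (if z = x then t else 1) * K t ms z y / (real x * (real x - real y))) =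
        (\<Sum>y=1..z. (if y < x then (if z = x then t else 1) * K t ms z y / (real x * (real x - real y)) else 0))"
      unfolding h_def .
  qed
  finally show ?thesis .
qed

lemma SSum_tri:
  assumes "\<And>x z. 1 \<le> z \<Longrightarrow> z \<le> x \<Longrightarrow> 0 \<le> F x z"
  shows "SSum (\<lambda>x. \<Sum>z=1..x. F x z) = (\<Sum>j. \<Sum>i. ennreal (F (Suc j + i) (Suc j)))"
proof -
  have "SSum (\<lambda>x. \<Sum>z=1..x. F x z) = (\<Sum>i. \<Sum>j\<le>i. ennreal (F (Suc i) (Suc j)))"
    unfolding SSum_def
  proof (rule arg_cong[where f=suminf], rule ext)
    fix i
    have "(\<Sum>z=1..Suc i. F (Suc i) z) = (\<Sum>j\<le>i. F (Suc i) (Suc j))"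
      by (simp only: sum.atLeast1_atMost_eq lessThan_Suc_atMost One_nat_def)
    then have "ennreal (\<Sum>z=1..Suc i. F (Suc i) z) = ennreal (\<Sum>j\<le>i. F (Suc i) (Suc j))" by simp
    also have "\<dots> = (\<Sum>j\<le>i. ennreal (F (Suc i) (Suc j)))"
      by (rule sum_ennreal[symmetric]) (use assms in auto)
    finally show "ennreal (\<Sum>z=1..Suc i. F (Suc i) z) = (\<Sum>j\<le>i. ennreal (F (Suc i) (Suc j)))" .
  qed
  also have "\<dots> = (\<Sum>j. \<Sum>i. ennreal (F (Suc (i + j)) (Suc j)))"
    by (rule tri_swap)
  finally show ?thesis by (simp add: add.commute)
qed

lemma ennreal_suminf_sum: "(\<Sum>n. \<Sum>i\<in>I. f i n :: ennreal) = (\<Sum>i\<in>I. \<Sum>n. f i n)"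
proof (cases "finite I")
  case True
  then show ?thesis by (intro suminf_sum summableI)
qed simp

lemma Q_step3:
  assumes z: "1 \<le> z" and t: "0 \<le> t" and nn: "\<And>y. 0 \<le> Kp y"
  defines "F \<equiv> \<lambda>x z. \<Sum>y=1..z. (if y < x then (if z = x then t else 1) * Kp y / (real x * (real x - real y)) else 0)"
  shows "(\<Sum>i. ennreal (F (z + i) z)) =
         ennreal (\<Sum>y=1..z. (if y < z then t * Kp y / (real z * (real z - real y)) else 0) + Kp y * ((harm z - harm (z - y)) / real y))"
proof -
  have Fzz: "F z z = (\<Sum>y=1..z. (if y < z then t * Kp y / (real z * (real z - real y)) else 0))"
    unfolding F_def by simp
  have FS: "F (z + Suc i) z = (\<Sum>y=1..z. Kp y * (1 / (real (z + Suc i) * (real (z + Suc i) - real y))))" for i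
    unfolding F_def by (intro sum.cong) auto
  have hnn: "\<And>y. y \<in> {1..z} \<Longrightarrow> (0::real) \<le> (harm z - harm (z - y)) / real y"
    using harm_mono[of "z - _" z] by (auto intro!: divide_nonneg_nonneg)
  have gnn: "\<And>y i. y \<in> {1..z} \<Longrightarrow> (0::real) \<le> 1 / (real (z + Suc i) * (real (z + Suc i) - real y))"
    by auto
  have "(\<Sum>i. ennreal (F (z + i) z)) = ennreal (F z z) + (\<Sum>i. ennreal (F (z + Suc i) z))"
    by (subst ennreal_suminf_head) simp
  also have "(\<Sum>i. ennreal (F (z + Suc i) z)) = (\<Sum>i. \<Sum>y=1..z. ennreal (Kp y) * ennreal (1 / (real (z + Suc i) * (real (z + Suc i) - real y))))"
  proof (rule arg_cong[where f=suminf], rule ext)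
    fix i
    have "ennreal (F (z + Suc i) z) = (\<Sum>y=1..z. ennreal (Kp y * (1 / (real (z + Suc i) * (real (z + Suc i) - real y)))))"
      unfolding FS using nn gnn by (intro sum_ennreal[symmetric] mult_nonneg_nonneg) auto
    also have "\<dots> = (\<Sum>y=1..z. ennreal (Kp y) * ennreal (1 / (real (z + Suc i) * (real (z + Suc i) - real y))))"
      using nn gnn by (intro sum.cong refl ennreal_mult) auto
    finally show "ennreal (F (z + Suc i) z) = (\<Sum>y=1..z. ennreal (Kp y) * ennreal (1 / (real (z + Suc i) * (real (z + Suc i) - real y))))" .
  qed
  also have "\<dots> = (\<Sum>y=1..z. ennreal (Kp y) * (\<Sum>i. ennreal (1 / (real (z + Suc i) * (real (z + Suc i) - real y)))))"
    by (simp add: ennreal_suminf_sum)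
  also have "\<dots> = (\<Sum>y=1..z. ennreal (Kp y) * ennreal ((harm z - harm (z - y)) / real y))"
  proof (rule sum.cong[OF refl])
    fix y assume y: "y \<in> {1..z}"
    have s: "(\<lambda>i. 1 / (real (z + Suc i) * (real (z + Suc i) - real y))) sums ((harm z - harm (z - y)) / real y)"
      using y by (intro telescope) auto
    have "(\<Sum>i. ennreal (1 / (real (z + Suc i) * (real (z + Suc i) - real y)))) = ennreal (\<Sum>i. 1 / (real (z + Suc i) * (real (z + Suc i) - real y)))"
      using y by (intro suminf_ennreal2 sums_summable[OF s]) auto
    also have "\<dots> = ennreal ((harm z - harm (z - y)) / real y)" using s by (simp add: sums_iff)
    finally show "ennreal (Kp y) * (\<Sum>i. ennreal (1 / (real (z + Suc i) * (real (z + Suc i) - real y)))) = ennreal (Kp y) * ennreal ((harm z - harm (z - y)) / real y)"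
      by simp
  qed
  also have "\<dots> = (\<Sum>y=1..z. ennreal (Kp y * ((harm z - harm (z - y)) / real y)))"
    using nn hnn by (intro sum.cong refl ennreal_mult[symmetric]) auto
  also have "\<dots> = ennreal (\<Sum>y=1..z. Kp y * ((harm z - harm (z - y)) / real y))"
    using nn hnn by (intro sum_ennreal mult_nonneg_nonneg) auto
  also have "ennreal (F z z) + \<dots> = ennreal (F z z + (\<Sum>y=1..z. Kp y * ((harm z - harm (z - y)) / real y)))"
    using nn hnn t unfolding Fzz
    by (intro ennreal_plus[symmetric] sum_nonneg mult_nonneg_nonneg) (auto intro!: divide_nonneg_nonneg mult_nonneg_nonneg)
  also have "F z z + (\<Sum>y=1..z. Kp y * ((harm z - harm (z - y)) / real y)) =
      (\<Sum>y=1..z. (if y < z then t * Kp y / (real z * (real z - real y)) else 0) + Kp y * ((harm z - harm (z - y)) / real y))"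
    unfolding Fzz by (simp add: sum.distrib)
  finally show ?thesis .
qed


lemma Uf_Vf:
  assumes "1 \<le> y" "y \<le> z"
  shows "Uf t z y = Vf t z y + (if y < z then 1 - t else 1) / real z"
proof -
  have hz: "harm z = harm (z - 1) + 1 / real z"
  proof -
    obtain n where n: "z = Suc n" using assms by (cases z) auto
    show ?thesis unfolding n by (simp add: harm_Suc divide_inverse)
  qed
  show ?thesis
  proof (cases "y < z")
    case True
    have zy: "0 < real z - real y" "0 < real z" using True by auto
    have "t * real y / (real z * (real z - real y)) = t / (real z - real y) - t / real z"
      using zy by (simp add: field_simps)
    then show ?thesis unfolding Uf_def Vf_def hz using True by (simp add: diff_divide_distrib)
  next
    case False
    then show ?thesis unfolding Uf_def Vf_def hz by simp
  qed
qed

lemma Q_expand: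
  assumes "c \<noteq> []" "\<forall>y\<in>set c. 1 \<le> y" "0 \<le> t"
  shows "Qc t c = SSum (\<lambda>z. \<Sum>y=1..z. K t (rotate1 c) z y * Uf t z y)"
proof -
  define a where "a = hd c"
  define m where "m = tl c"
  have c: "c = a # m" unfolding a_def m_def using assms(1) by simp
  have a1: "1 \<le> a" using assms(2) c by auto
  define e where "e = a - 1"
  have ae: "a = Suc e" using a1 unfolding e_def by simp
  define ms where "ms = m @ [e]"
  have msne: "ms \<noteq> []" unfolding ms_def by simp
  have d: "rotate1 c = m @ [a]" unfolding c by simp
  define F where "F x z = (\<Sum>y=1..z. (if y < x then (if z = x then t else 1) * K t ms z y / (real x * (real x - real y)) else 0))" for x z
  have Fnn: "0 \<le> F x z" for x z
    unfolding F_def using assms(3) by (auto intro!: sum_nonneg divide_nonneg_nonneg mult_nonneg_nonneg K_nonneg)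
  have "Qc t c = SSum (\<lambda>x. \<Sum>z=1..x. F x z)"
    unfolding Qc_def F_def
  proof (rule SSum_cong)
    fix x :: nat assume x: "1 \<le> x"
    show "(\<Sum>y=1..x-1. K t (1 # tl c @ [hd c - 1]) x y / (real x - real y)) =
          (\<Sum>z=1..x. \<Sum>y=1..z. (if y < x then (if z = x then t else 1) * K t ms z y / (real x * (real x - real y)) else 0))"
      using Q_step1[OF x msne, of t] unfolding ms_def e_def a_def m_def by simp
  qed
  also have "\<dots> = (\<Sum>j. \<Sum>i. ennreal (F (Suc j + i) (Suc j)))"
    by (rule SSum_tri) (rule Fnn)
  also have "\<dots> = (\<Sum>j. ennreal (\<Sum>y=1..Suc j. K t (rotate1 c) (Suc j) y * Uf t (Suc j) y))"
  proof (rule arg_cong[where f=suminf], rule ext)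
    fix j
    define z where "z = Suc j"
    have z1: "1 \<le> z" unfolding z_def by simp
    have "(\<Sum>i. ennreal (F (z + i) z)) =
         ennreal (\<Sum>y=1..z. (if y < z then t * K t ms z y / (real z * (real z - real y)) else 0) + K t ms z y * ((harm z - harm (z - y)) / real y))"
      unfolding F_def using Q_step3[OF z1 assms(3), of "\<lambda>y. K t ms z y"] assms(3) K_nonneg by simp
    also have "(\<Sum>y=1..z. (if y < z then t * K t ms z y / (real z * (real z - real y)) else 0) + K t ms z y * ((harm z - harm (z - y)) / real y))
        = (\<Sum>y=1..z. K t (rotate1 c) z y * Uf t z y)"
    proof (rule sum.cong[OF refl])
      fix y assume y: "y \<in> {1..z}"
      have ypos: "0 < real y" using y by auto
      have Kd: "K t (rotate1 c) z y = K t ms z y / real y"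
      proof -
        have "K t (m @ [a]) z y = 1 / real y ^ a * K t (m @ [0]) z y" by (rule K_bot)
        moreover have "K t ms z y = 1 / real y ^ e * K t (m @ [0]) z y" unfolding ms_def by (rule K_bot)
        ultimately show ?thesis unfolding d ae by (simp add: field_simps)
      qed
      show "(if y < z then t * K t ms z y / (real z * (real z - real y)) else 0) + K t ms z y * ((harm z - harm (z - y)) / real y)
          = K t (rotate1 c) z y * Uf t z y"
        unfolding Kd Uf_def using ypos by (auto simp: field_simps)
    qed
    finally show "(\<Sum>i. ennreal (F (Suc j + i) (Suc j))) = ennreal (\<Sum>y=1..Suc j. K t (rotate1 c) (Suc j) y * Uf t (Suc j) y)"
      unfolding z_def .
  qed
  also have "\<dots> = SSum (\<lambda>z. \<Sum>y=1..z. K t (rotate1 c) z y * Uf t z y)"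
    unfolding SSum_def ..
  finally show ?thesis .
qed

lemma E3:
  assumes "c \<noteq> []" "\<forall>y\<in>set c. 1 \<le> y" "0 \<le> t" "t \<le> 1"
  shows "Qc t c = Pc t (rotate1 c) + Rc t (rotate1 c)"
proof -
  define d where "d = rotate1 c"
  have dne: "d \<noteq> []" unfolding d_def using assms(1) by simp
  have "Qc t c = SSum (\<lambda>z. \<Sum>y=1..z. K t d z y * Uf t z y)"
    unfolding d_def by (rule Q_expand[OF assms(1,2,3)])
  also have "\<dots> = SSum (\<lambda>z. (\<Sum>y=1..z. K t d z y * Vf t z y) + (\<Sum>y=1..z. K t d z y * (if y < z then 1 - t else 1) / real z))"
  proof (rule SSum_cong)
    fix z :: nat assume "1 \<le> z"
    show "(\<Sum>y=1..z. K t d z y * Uf t z y) = (\<Sum>y=1..z. K t d z y * Vf t z y) + (\<Sum>y=1..z. K t d z y * (if y < z then 1 - t else 1) / real z)"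
      unfolding sum.distrib[symmetric] by (intro sum.cong refl) (auto simp: Uf_Vf distrib_left)
  qed
  also have "\<dots> = SSum (\<lambda>z. \<Sum>y=1..z. K t d z y * Vf t z y) + SSum (\<lambda>z. \<Sum>y=1..z. K t d z y * (if y < z then 1 - t else 1) / real z)"
    using assms(3,4) by (intro SSum_add) (auto intro!: sum_nonneg mult_nonneg_nonneg divide_nonneg_nonneg K_nonneg Vf_nonneg)
  also have "\<dots> = Pc t d + Rc t d"
    unfolding P_expand[OF dne] Rc_def ..
  finally show ?thesis unfolding d_def .
qed


lemma sum_list_rotate: "sum_list (rotate l xs) = sum_list (xs :: nat list)"
proof -
  have "sum_list (drop (l mod length xs) xs) + sum_list (take (l mod length xs) xs) = sum_list xs"
    by (metis add.commute append_take_drop_id sum_list_append)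
  then show ?thesis by (simp add: rotate_drop_take)
qed

lemma sum_shift_cyclic:
  assumes "1 \<le> n" "f n = (f 0 :: 'a::comm_monoid_add)"
  shows "(\<Sum>l<n. f (Suc l)) = (\<Sum>l<n. f l)"
proof -
  obtain m where n: "n = Suc m" using assms by (cases n) auto
  have "(\<Sum>l<n. f (Suc l)) = (\<Sum>l<m. f (Suc l)) + f n" unfolding n by simp
  also have "\<dots> = f 0 + (\<Sum>l<m. f (Suc l))" using assms by (simp add: add.commute)
  also have "\<dots> = (\<Sum>l<n. f l)" unfolding n by (simp only: sum.lessThan_Suc_shift)
  finally show ?thesis .
qed

lemma Zk_fin: "1 \<le> k \<Longrightarrow> Zk k < top"
proof -
  assume k: "1 \<le> k"
  have "Zk k = SSum (G 0 [k + 1])" unfolding Zk_def by (intro SSum_cong) (simp add: G_single)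
  also have "\<dots> < top" using k by (intro FIN) auto
  finally show ?thesis .
qed

lemma main_enn:
  assumes n: "length ks = n" "1 \<le> n" and pos: "\<forall>x\<in>set ks. 1 \<le> x" and ex: "\<exists>x\<in>set ks. x \<noteq> 1"
    and t: "0 \<le> t" "t \<le> 1"
  shows "(\<Sum>l<n. Ac t (rotate l ks)) =
         ennreal (1 - t) * (\<Sum>l<n. SSum (G t ((hd (rotate l ks) + 1) # tl (rotate l ks)))) +
         of_nat (sum_list ks) * (ennreal (t ^ n) * Zk (sum_list ks))"
proof -
  define c where "c l = rotate l ks" for l
  define k where "k = sum_list ks"
  have ksne: "ks \<noteq> []" using n by auto
  have cne: "c l \<noteq> []" for l unfolding c_def using ksne by simp
  have cpos: "\<forall>y\<in>set (c l). 1 \<le> y" for l unfolding c_def using pos by simp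
  have clen: "length (c l) = n" for l unfolding c_def using n by simp
  have csum: "sum_list (c l) = k" for l unfolding c_def k_def by (rule sum_list_rotate)
  have cSuc: "rotate1 (c l) = c (Suc l)" for l unfolding c_def by simp
  have chd: "hd (c l) = ks ! (l mod n)" for l unfolding c_def using hd_rotate_conv_nth[OF ksne] n by simp
  have cn: "c n = c 0" unfolding c_def using n by (simp add: rotate_conv_mod[of n])
  have natsum: "(\<Sum>l<n. (hd (c l) - 1)) + n = k"
  proof -
    have "(\<Sum>l<n. (hd (c l) - 1)) + n = (\<Sum>l<n. (hd (c l) - 1) + 1)" by (simp only: sum.distrib) simp
    also have "\<dots> = (\<Sum>l<n. ks ! l)"
    proof (rule sum.cong[OF refl])
      fix l assume "l \<in> {..<n}"
      then show "hd (c l) - 1 + 1 = ks ! l" using chd[of l] cpos[of l] cne[of l] by (cases "c l") auto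
    qed
    also have "\<dots> = k" unfolding k_def using n by (simp add: sum_list_sum_nth atLeast0LessThan)
    finally show ?thesis .
  qed
  have k1: "1 \<le> k" using natsum n by linarith
  define Z' where "Z' l = SSum (G t ((hd (c l) + 1) # tl (c l)))" for l
  have Z'fin: "Z' l < top" for l
    unfolding Z'_def using cpos[of l] cne[of l] t
    by (intro FIN) (auto simp: list.set_sel(2))
  have Rfin: "Rc t (c l) < top" for l
  proof -
    have "Rc t (c l) = ennreal (1 - t) * Z' l + ennreal (t ^ n) * Zk k"
      unfolding Z'_def using E4[OF cne t] clen csum by simp
    then show ?thesis using Z'fin[of l] Zk_fin[OF k1] by (simp add: ennreal_mult_less_top less_top)
  qed
  have step: "Pc t (c l) = Pc t (c (Suc l)) + Rc t (c l')" if "hd (c l) = 1" "l' = Suc l" for l l'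
  proof -
    have A0: "Ac t (c l) = 0" unfolding Ac_def using that by simp
    have "Ac t (c l) + Pc t (c l) = Qc t (c l) + of_nat (hd (c l) - 1) * (ennreal (t ^ length (c l)) * Zk (sum_list (c l)))"
      by (rule E12[OF cne cpos t(1)])
    then have "Pc t (c l) = Qc t (c l)" using A0 that by simp
    also have "\<dots> = Pc t (c (Suc l)) + Rc t (c (Suc l))" using E3[OF cne cpos t] cSuc by simp
    finally show ?thesis using that by simp
  qed
  have chain: "\<forall>l. 2 \<le> hd (c (l + m)) \<and> (\<forall>i<m. hd (c (l + i)) = 1) \<longrightarrow> Pc t (c l) < top" for m
  proof (induction m)
    case 0
    then show ?case using E5[OF cne _ cpos t] by simp
  next
    case (Suc m)
    show ?case
    proof (intro allI impI)
      fix l assume h: "2 \<le> hd (c (l + Suc m)) \<and> (\<forall>i<Suc m. hd (c (l + i)) = 1)"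
      then have h1: "hd (c l) = 1" by auto
      have "2 \<le> hd (c (Suc l + m)) \<and> (\<forall>i<m. hd (c (Suc l + i)) = 1)" using h by auto
      then have "Pc t (c (Suc l)) < top" using Suc.IH by blast
      then show "Pc t (c l) < top" using step[OF h1 refl] Rfin[of "Suc l"] by (simp add: less_top)
    qed
  qed
  have Pfin: "Pc t (c l) < top" for l
  proof -
    obtain j where j: "j < n" "ks ! j \<noteq> 1" using ex n by (auto simp: in_set_conv_nth)
    define m0 where "m0 = j + (n - 1) * l"
    have "(l + m0) mod n = j"
    proof -
      have "l + m0 = j + n * l" unfolding m0_def using n by (cases n) (auto simp: algebra_simps)
      then show ?thesis using j by simp
    qed
    then have "hd (c (l + m0)) \<noteq> 1" using chd j by simp
    then have "\<exists>m. hd (c (l + m)) \<noteq> 1" by blast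
    then obtain m where m: "hd (c (l + m)) \<noteq> 1" "\<forall>i<m. hd (c (l + i)) = 1"
      using exists_least_iff[of "\<lambda>m. hd (c (l + m)) \<noteq> 1"] by auto
    have "1 \<le> hd (c (l + m))" using cpos[of "l + m"] cne[of "l + m"] by auto
    then have "2 \<le> hd (c (l + m))" using m by auto
    then show ?thesis using chain m by blast
  qed
  have E: "Ac t (c l) + Pc t (c l) = Pc t (c (Suc l)) + ((ennreal (1 - t) * Z' (Suc l) + ennreal (t ^ n) * Zk k) +
            of_nat (hd (c l) - 1) * (ennreal (t ^ n) * Zk k))" for l
  proof -
    have "Ac t (c l) + Pc t (c l) = Qc t (c l) + of_nat (hd (c l) - 1) * (ennreal (t ^ length (c l)) * Zk (sum_list (c l)))"
      by (rule E12[OF cne cpos t(1)])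
    also have "Qc t (c l) = Pc t (c (Suc l)) + Rc t (c (Suc l))" using E3[OF cne cpos t] cSuc by simp
    also have "Rc t (c (Suc l)) = ennreal (1 - t) * Z' (Suc l) + ennreal (t ^ n) * Zk k"
      unfolding Z'_def using E4[OF cne t] clen csum by simp
    finally show ?thesis using clen csum by (simp add: add.assoc)
  qed
  have "(\<Sum>l<n. Ac t (c l)) + (\<Sum>l<n. Pc t (c l)) = (\<Sum>l<n. Ac t (c l) + Pc t (c l))"
    by (simp add: sum.distrib)
  also have "\<dots> = (\<Sum>l<n. Pc t (c (Suc l))) + ((\<Sum>l<n. ennreal (1 - t) * Z' (Suc l) + ennreal (t ^ n) * Zk k) +
            (\<Sum>l<n. of_nat (hd (c l) - 1) * (ennreal (t ^ n) * Zk k)))"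
    unfolding E by (simp add: sum.distrib)
  also have "(\<Sum>l<n. Pc t (c (Suc l))) = (\<Sum>l<n. Pc t (c l))"
    by (rule sum_shift_cyclic[OF n(2)]) (simp add: cn)
  finally have eq: "(\<Sum>l<n. Ac t (c l)) + (\<Sum>l<n. Pc t (c l)) = (\<Sum>l<n. Pc t (c l)) +
      ((\<Sum>l<n. ennreal (1 - t) * Z' (Suc l) + ennreal (t ^ n) * Zk k) + (\<Sum>l<n. of_nat (hd (c l) - 1) * (ennreal (t ^ n) * Zk k)))" .
  have Pne: "(\<Sum>l<n. Pc t (c l)) \<noteq> \<infinity>"
    using Pfin by (simp add: ennreal_sum_eq_top less_top)
  have canc: "(\<Sum>l<n. Ac t (c l)) = (\<Sum>l<n. ennreal (1 - t) * Z' (Suc l) + ennreal (t ^ n) * Zk k) +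
      (\<Sum>l<n. of_nat (hd (c l) - 1) * (ennreal (t ^ n) * Zk k))"
    using eq Pne ennreal_add_left_cancel[of "\<Sum>l<n. Pc t (c l)"] by (simp add: add.commute)
  have Z'shift: "(\<Sum>l<n. Z' (Suc l)) = (\<Sum>l<n. Z' l)"
    by (rule sum_shift_cyclic[OF n(2)]) (simp add: Z'_def cn)
  define X where "X = ennreal (t ^ n) * Zk k"
  have s1: "(\<Sum>l<n. ennreal (1 - t) * Z' (Suc l)) = ennreal (1 - t) * (\<Sum>l<n. Z' l)"
    unfolding sum_distrib_left[symmetric] Z'shift ..
  have s2: "(\<Sum>l<n. of_nat (hd (c l) - 1) * X) = (\<Sum>l<n. of_nat (hd (c l) - 1)) * X"
    unfolding sum_distrib_right ..
  have s3: "(\<Sum>l<n. X) = of_nat n * X" by simp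
  have big: "(\<Sum>l<n. ennreal (1 - t) * Z' (Suc l) + ennreal (t ^ n) * Zk k) + (\<Sum>l<n. of_nat (hd (c l) - 1) * (ennreal (t ^ n) * Zk k))
      = ennreal (1 - t) * (\<Sum>l<n. Z' l) + (of_nat n + (\<Sum>l<n. of_nat (hd (c l) - 1))) * (ennreal (t ^ n) * Zk k)"
    unfolding X_def[symmetric] sum.distrib s1 s2 s3 by (simp only: distrib_right add.assoc)
  have nk: "(of_nat n + (\<Sum>l<n. of_nat (hd (c l) - 1)) :: ennreal) = of_nat k"
  proof -
    have "(of_nat n + (\<Sum>l<n. of_nat (hd (c l) - 1)) :: ennreal) = of_nat ((\<Sum>l<n. hd (c l) - 1) + n)"
      by (simp add: add.commute)
    then show ?thesis unfolding natsum .
  qed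
  have fin: "(\<Sum>l<n. Ac t (c l)) = ennreal (1 - t) * (\<Sum>l<n. Z' l) + of_nat k * (ennreal (t ^ n) * Zk k)"
    unfolding canc big nk ..
  show ?thesis using fin unfolding Z'_def c_def k_def .
qed


theorem theorem5p5:
  fixes ks :: "nat list" and n k :: nat
  assumes "length ks = n" and "n \<ge> 1"
    and "\<forall>x\<in>set ks. x \<ge> 1" and "\<exists>x\<in>set ks. x \<noteq> 1"
    and "k = sum_list ks"
  shows "(\<Sum>l<n. \<Sum>j=1..ks ! l - 1. zeta_t ((ks ! l + 1 - j) # tl (rotate l ks) @ [j]))
       = [:1, -1:] * (\<Sum>l<n. zeta_t ((ks ! l + 1) # tl (rotate l ks)))
         + monom (real k * mzv [k + 1]) n"
  (is "?L = ?R")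
proof -
  have ksne: "ks \<noteq> []" using assms(1,2) by auto
  have hdrot: "hd (rotate l ks) = ks ! l" if "l < n" for l
    using hd_rotate_conv_nth[OF ksne, of l] that assms(1) by simp
  have tlpos: "\<forall>y\<in>set (tl (rotate l ks)). 1 \<le> y" for l
    using assms(3) by (auto dest: list.set_sel(2)[rotated] simp: ksne)
  have k1: "1 \<le> k"
  proof -
    have "ks ! 0 \<le> sum_list ks" using ksne by (intro elem_le_sum_list) auto
    moreover have "1 \<le> ks ! 0" using assms(3) ksne by auto
    ultimately show ?thesis using assms(5) by simp
  qed
  have mzvk: "ennreal (mzv [k + 1]) = Zk k"
  proof -
    have "ennreal (mzv [k + 1]) = SSum (G 0 [k + 1])" using k1 by (intro mzv_eq) auto
    also have "\<dots> = Zk k" unfolding Zk_def by (intro SSum_cong) (simp add: G_single)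
    finally show ?thesis .
  qed
  have pt: "poly ?L t = poly ?R t" if t: "0 \<le> t" "t \<le> 1" for t
  proof -
    have admL: "ennreal (poly (zeta_t ((ks ! l + 1 - j) # tl (rotate l ks) @ [j])) t) = SSum (G t ((ks ! l + 1 - j) # tl (rotate l ks) @ [j]))
        \<and> 0 \<le> poly (zeta_t ((ks ! l + 1 - j) # tl (rotate l ks) @ [j])) t"
      if "j \<in> {1..ks ! l - 1}" for l j
    proof -
      have "\<forall>y\<in>set ((ks ! l + 1 - j) # tl (rotate l ks) @ [j]). 1 \<le> y" using tlpos[of l] that by auto
      moreover have "2 \<le> hd ((ks ! l + 1 - j) # tl (rotate l ks) @ [j])" using that by auto
      ultimately show ?thesis using zeta_t_eq[OF _ _ _ t] by auto
    qed
    have admR: "ennreal (poly (zeta_t ((ks ! l + 1) # tl (rotate l ks))) t) = SSum (G t ((ks ! l + 1) # tl (rotate l ks)))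
        \<and> 0 \<le> poly (zeta_t ((ks ! l + 1) # tl (rotate l ks))) t" if "l < n" for l
    proof -
      have "\<forall>y\<in>set ((ks ! l + 1) # tl (rotate l ks)). 1 \<le> y" using tlpos[of l] by auto
      moreover have "2 \<le> hd ((ks ! l + 1) # tl (rotate l ks))" using that assms(1,3) by (auto simp: nth_mem)
      ultimately show ?thesis using zeta_t_eq[OF _ _ _ t] by auto
    qed
    have L: "poly ?L t = (\<Sum>l<n. \<Sum>j=1..ks ! l - 1. poly (zeta_t ((ks ! l + 1 - j) # tl (rotate l ks) @ [j])) t)"
      by (simp add: poly_sum)
    have R: "poly ?R t = (1 - t) * (\<Sum>l<n. poly (zeta_t ((ks ! l + 1) # tl (rotate l ks))) t) + real k * mzv [k + 1] * t ^ n"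
      by (simp add: poly_sum poly_monom left_diff_distrib)
    have Lnn: "0 \<le> poly ?L t" unfolding L using admL by (intro sum_nonneg) auto
    have Snn: "0 \<le> (\<Sum>l<n. poly (zeta_t ((ks ! l + 1) # tl (rotate l ks))) t)" using admR by (intro sum_nonneg) auto
    have Rnn: "0 \<le> poly ?R t" unfolding R using Snn t mzv_nonneg[of "[k+1]"] by (intro add_nonneg_nonneg mult_nonneg_nonneg) auto
    have "ennreal (poly ?L t) = (\<Sum>l<n. \<Sum>j=1..ks ! l - 1. ennreal (poly (zeta_t ((ks ! l + 1 - j) # tl (rotate l ks) @ [j])) t))"
    proof -
      have "ennreal (poly ?L t) = (\<Sum>l<n. ennreal (\<Sum>j=1..ks ! l - 1. poly (zeta_t ((ks ! l + 1 - j) # tl (rotate l ks) @ [j])) t))"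
        unfolding L by (rule sum_ennreal[symmetric]) (use admL in \<open>auto intro!: sum_nonneg\<close>)
      also have "\<dots> = (\<Sum>l<n. \<Sum>j=1..ks ! l - 1. ennreal (poly (zeta_t ((ks ! l + 1 - j) # tl (rotate l ks) @ [j])) t))"
        by (intro sum.cong refl sum_ennreal[symmetric]) (use admL in auto)
      finally show ?thesis .
    qed
    also have "\<dots> = (\<Sum>l<n. Ac t (rotate l ks))"
      unfolding Ac_def using admL hdrot by (intro sum.cong refl) auto
    also have "\<dots> = ennreal (1 - t) * (\<Sum>l<n. SSum (G t ((hd (rotate l ks) + 1) # tl (rotate l ks)))) +
         of_nat (sum_list ks) * (ennreal (t ^ n) * Zk (sum_list ks))"
      by (rule main_enn[OF assms(1,2,3,4) t])
    also have "(\<Sum>l<n. SSum (G t ((hd (rotate l ks) + 1) # tl (rotate l ks)))) = ennreal (\<Sum>l<n. poly (zeta_t ((ks ! l + 1) # tl (rotate l ks))) t)"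
      using admR hdrot by (subst sum_ennreal[symmetric]) auto
    also have "of_nat (sum_list ks) * (ennreal (t ^ n) * Zk (sum_list ks)) = ennreal (real k * mzv [k + 1] * t ^ n)"
      using t mzvk assms(5) mzv_nonneg[of "[k+1]"] by (simp add: ennreal_mult ennreal_of_nat_eq_real_of_nat mult_ac)
    also have "ennreal (1 - t) * ennreal (\<Sum>l<n. poly (zeta_t ((ks ! l + 1) # tl (rotate l ks))) t) + ennreal (real k * mzv [k + 1] * t ^ n)
       = ennreal (poly ?R t)"
      unfolding R using t Snn mzv_nonneg[of "[k+1]"] by (simp add: ennreal_mult ennreal_plus)
    finally show ?thesis using Lnn Rnn by simp
  qed
  have "?L - ?R = 0"
  proof (rule ccontr)
    assume ne: "?L - ?R \<noteq> 0"
    have "{0..1::real} \<subseteq> {x. poly (?L - ?R) x = 0}" using pt by auto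
    moreover have "infinite {0..1::real}" by (rule infinite_Icc) simp
    ultimately show False using poly_roots_finite[OF ne] finite_subset by blast
  qed
  then show ?thesis by simp
qed


end
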